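(* Let $\Phi$ (dimension $d$), $\Psi$ (dimension $e$) be $\mathbf t$-modules over $K$, $\delta\in\mathrm{Der}(\Phi,\Psi)$, and let $0\to F\xrightarrow{i}X\xrightarrow{\pi}E\to0$ be the short exact sequence given by $\delta$, i.e. $F=\Psi$, $E=\Phi$, $X_a=\begin{bmatrix}\Phi_a&0\\ \delta(a)&\Psi_a\end{bmatrix}$, $i=\begin{bmatrix}0\\ I_e\end{bmatrix}$, $\pi=\begin{bmatrix}I_d&0\end{bmatrix}$. Let $G$ be a $\mathbf t$-module. Then: (i) there is an exact sequence of $\mathbb F_q[t]$-modules $$0\to\operatorname{Hom}_\tau(G,F)\xrightarrow{i\circ-}\operatorname{Hom}_\tau(G,X)\xrightarrow{\pi\circ-}\operatorname{Hom}_\tau(G,E)\xrightarrow{\delta\circ-}\operatorname{Ext}^1_\tau(G,F)\xrightarrow{-i\circ-}\operatorname{Ext}^1_\tau(G,X)\xrightarrow{-\pi\circ-}\operatorname{Ext}^1_\tau(G,E)\to0,$$ where $\delta\circ-$ sends $f$ to the class of the biderivation $a\mapsto\delta(a)f$, and $-i\circ-$, $-\pi\circ-$ send the class of a biderivation $\eta$ to the class of $a\mapsto -i\eta(a)$, resp. $a\mapsto-\pi\eta(a)$; (ii) there is an exact sequence of $\mathbb F_q[t]$-modules $$0\to\operatorname{Hom}_\tau(E,G)\xrightarrow{-\circ\pi}\operatorname{Hom}_\tau(X,G)\xrightarrow{-\circ i}\operatorname{Hom}_\tau(F,G)\xrightarrow{-\circ\delta}\operatorname{Ext}^1_\tau(E,G)\xrightarrow{-\circ(-\pi)}\operatorname{Ext}^1_\tau(X,G)\xrightarrow{-\circ(-i)}\operatorname{Ext}^1_\tau(F,G)\to0,$$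 where $-\circ\delta$ sends $h$ to the class of $a\mapsto h\delta(a)$, and the last two maps send the class of $\eta$ to the class of $a\mapsto-\eta(a)\pi$, resp. $a\mapsto-\eta(a)i$.
   Context: $A=\mathbb F_q[t]$, $K$ a field of characteristic $p$ with $\mathbb F_q$-algebra map $\iota:A\to K$, $\theta=\iota(t)$; $K\{\tau\}$ twisted polynomials with $\tau x=x^q\tau$. A $\mathbf t$-module of dimension $d$: $\mathbb F_q$-algebra homomorphism $\Phi:\mathbb F_q[t]\to\mathrm{Mat}_d(K\{\tau\})$ with $\Phi_t=(\theta I+N)+\sum_{i\ge1}M_i\tau^i$, $N$ nilpotent. $\operatorname{Hom}_\tau(\Psi,\Phi)$ (for $\Psi$ of dim $e$, $\Phi$ of dim $d$) is the set of $f\in\mathrm{Mat}_{d\times e}(K\{\tau\})$ with $f\Psi_t=\Phi_tf$, an $\mathbb F_q[t]$-module via $a\cdot f=\Phi_af$. $\mathrm{Der}(\Phi,\Psi)$: $\mathbb F_q$-linear $\delta:\mathbb F_q[t]\to\mathrm{Mat}_{e\times d}(K\{\tau\})$ with $\delta(ab)=\Psi_a\delta(b)+\delta(a)\Phi_b$; inner: $\delta^{(U)}(a)=U\Phi_a-\Psi_aU$; $\operatorname{Ext}^1_\tau(\Phi,\Psi)=\mathrm{Der}(\Phi,\Psi)/\mathrm{Der}_{in}(\Phi,\Psi)$ with $a*[\delta]=[\Psi_a\delta]$; this is the group (with Baer sum) of extensions $0\to\Psi\to X\to\Phi\to0$ of $\mathbf t$-modules, $[\delta]$ corresponding to $X_a=\begin{bmatrix}\Phi_a&0\\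 \delta(a)&\Psi_a\end{bmatrix}$. *)

theory Defs
  imports "HOL-Computational_Algebra.Polynomial"
begin

(* F_q realised as the set of roots of X^q - X in K (it is a subfield of K of
   cardinality q exactly when K is an F_q-algebra, which is assumed) *)
definition Fq :: "nat \<Rightarrow> 'k::field set" where
  "Fq q = {x. x ^ q = x}"

definition Aq :: "nat \<Rightarrow> 'k::field poly set" where
  "Aq q = {a. \<forall>i. coeff a i \<in> Fq q}"

(* sum_i a_i tau^i is represented by the polynomial sum_i a_i X^i;
   multiplication obeys tau x = x^q tau:  (a tau^i)(b tau^j) = a b^(q^i) tau^(i+j) *)
definition tmult :: "nat \<Rightarrow> 'k::field poly \<Rightarrow> 'k poly \<Rightarrow> 'k poly" where
  "tmult q f g = (\<Sum>i\<le>degree f. monom (coeff f i) i * map_poly (\<lambda>c. c ^ (q ^ i)) g)"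

type_synonym 'k tmatrix = "nat \<Rightarrow> nat \<Rightarrow> 'k poly"

(* M is an m x n matrix: entries outside the index range are zero *)
definition tmat :: "nat \<Rightarrow> nat \<Rightarrow> 'k::field tmatrix \<Rightarrow> bool" where
  "tmat m n M \<longleftrightarrow> (\<forall>i j. (m \<le> i \<or> n \<le> j) \<longrightarrow> M i j = 0)"

definition mzero :: "'k::field tmatrix" where
  "mzero = (\<lambda>i j. 0)"

definition madd :: "'k::field tmatrix \<Rightarrow> 'k tmatrix \<Rightarrow> 'k tmatrix" where
  "madd M N = (\<lambda>i j. M i j + N i j)"

definition mneg :: "'k::field tmatrix \<Rightarrow> 'k tmatrix" where
  "mneg M = (\<lambda>i j. - M i j)"

definition msub :: "'k::field tmatrix \<Rightarrow> 'k tmatrix \<Rightarrow> 'k tmatrix" where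
  "msub M N = (\<lambda>i j. M i j - N i j)"

definition mmul :: "nat \<Rightarrow> nat \<Rightarrow> 'k::field tmatrix \<Rightarrow> 'k tmatrix \<Rightarrow> 'k tmatrix" where
  "mmul q n M N = (\<lambda>i j. \<Sum>k<n. tmult q (M i k) (N k j))"

definition mone :: "nat \<Rightarrow> 'k::field tmatrix" where
  "mone n = (\<lambda>i j. if i = j \<and> i < n then 1 else 0)"

(* scalar (element of K, acting as a constant twisted polynomial) times matrix, from the left *)
definition mscal :: "'k::field \<Rightarrow> 'k tmatrix \<Rightarrow> 'k tmatrix" where
  "mscal c M = (\<lambda>i j. smult c (M i j))"

fun mpow :: "nat \<Rightarrow> nat \<Rightarrow> 'k::field tmatrix \<Rightarrow> nat \<Rightarrow> 'k tmatrix" where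
  "mpow q n M 0 = mone n"
| "mpow q n M (Suc k) = mmul q n M (mpow q n M k)"

(* Phi_t = T (a d x d matrix over K{tau}); Phi_a = a(T) for a in F_q[t] *)
definition tev :: "nat \<Rightarrow> nat \<Rightarrow> 'k::field tmatrix \<Rightarrow> 'k poly \<Rightarrow> 'k tmatrix" where
  "tev q d T a = (\<lambda>i j. \<Sum>k\<le>degree a. smult (coeff a k) (mpow q d T k i j))"

(* T = (theta I + N) + sum_{i>=1} M_i tau^i with N nilpotent (over K) *)
definition is_tmodule :: "nat \<Rightarrow> 'k::field \<Rightarrow> nat \<Rightarrow> 'k tmatrix \<Rightarrow> bool" where
  "is_tmodule q \<theta> d T \<longleftrightarrow> tmat d d T \<and>
     (let N = (\<lambda>i j. if i < d \<and> j < d then [: coeff (T i j) 0 - (if i = j then \<theta> else 0) :] else 0) in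
      \<exists>m. mpow q d N m = mzero)"

(* Hom_tau(Psi, Phi), Psi of dim e with Psi_t = S, Phi of dim d with Phi_t = T *)
definition Hom_tau :: "nat \<Rightarrow> nat \<Rightarrow> 'k::field tmatrix \<Rightarrow> nat \<Rightarrow> 'k tmatrix \<Rightarrow> 'k tmatrix set" where
  "Hom_tau q e S d T = {f. tmat d e f \<and> mmul q e f S = mmul q d T f}"

(* Der(Phi, Psi): Phi of dim d (Phi_t = T), Psi of dim e (Psi_t = S);
   F_q-linear maps delta : F_q[t] \<rightarrow> Mat_{e x d}(K{tau}) with the Leibniz rule
   (only the values on F_q[t] are relevant) *)
definition Der :: "nat \<Rightarrow> nat \<Rightarrow> 'k::field tmatrix \<Rightarrow> nat \<Rightarrow> 'k tmatrix
                     \<Rightarrow> ('k poly \<Rightarrow> 'k tmatrix) set" where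
  "Der q d T e S = {\<delta>.
     (\<forall>a\<in>Aq q. tmat e d (\<delta> a)) \<and>
     (\<forall>a\<in>Aq q. \<forall>b\<in>Aq q. \<delta> (a + b) = madd (\<delta> a) (\<delta> b)) \<and>
     (\<forall>c\<in>Fq q. \<forall>a\<in>Aq q. \<delta> (smult c a) = mscal c (\<delta> a)) \<and>
     (\<forall>a\<in>Aq q. \<forall>b\<in>Aq q. \<delta> (a * b) =
         madd (mmul q e (tev q e S a) (\<delta> b)) (mmul q d (\<delta> a) (tev q d T b)))}"

(* delta and delta' define the same class in Ext^1_tau(Phi,Psi):
   their difference is an inner biderivation delta^(U) *)
definition ext_eq :: "nat \<Rightarrow> nat \<Rightarrow> 'k::field tmatrix \<Rightarrow> nat \<Rightarrow> 'k tmatrix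
                      \<Rightarrow> ('k poly \<Rightarrow> 'k tmatrix) \<Rightarrow> ('k poly \<Rightarrow> 'k tmatrix) \<Rightarrow> bool" where
  "ext_eq q d T e S \<delta> \<delta>' \<longleftrightarrow> (\<exists>U. tmat e d U \<and>
     (\<forall>a\<in>Aq q. msub (\<delta> a) (\<delta>' a) = msub (mmul q d U (tev q d T a)) (mmul q e (tev q e S a) U)))"

record 'a smod =
  scar :: "'a set"
  seqv :: "'a \<Rightarrow> 'a \<Rightarrow> bool"
  sadd :: "'a \<Rightarrow> 'a \<Rightarrow> 'a"
  szero :: "'a"

record ('a, 'r) ssmod = "'a smod" +
  sact :: "'r \<Rightarrow> 'a \<Rightarrow> 'a"

definition Hom_mod :: "nat \<Rightarrow> nat \<Rightarrow> 'k::field tmatrix \<Rightarrow> nat \<Rightarrow> 'k tmatrix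
                       \<Rightarrow> ('k tmatrix, 'k poly) ssmod" where
  "Hom_mod q e S d T = \<lparr> scar = Hom_tau q e S d T, seqv = (=), sadd = madd, szero = mzero,
                         sact = (\<lambda>a f. mmul q d (tev q d T a) f) \<rparr>"

(* Ext^1_tau(Phi,Psi) = Der / Der_in as F_q[t]-module: a * [delta] = [Psi_a delta] *)
definition Ext_mod :: "nat \<Rightarrow> nat \<Rightarrow> 'k::field tmatrix \<Rightarrow> nat \<Rightarrow> 'k tmatrix
                       \<Rightarrow> ('k poly \<Rightarrow> 'k tmatrix, 'k poly) ssmod" where
  "Ext_mod q d T e S = \<lparr> scar = Der q d T e S, seqv = ext_eq q d T e S,
                         sadd = (\<lambda>\<delta> \<delta>' a. madd (\<delta> a) (\<delta>' a)), szero = (\<lambda>a. mzero),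
                         sact = (\<lambda>a \<delta> b. mmul q e (tev q e S a) (\<delta> b)) \<rparr>"

definition smod_hom :: "'r set \<Rightarrow> ('a, 'r) ssmod \<Rightarrow> ('b, 'r) ssmod \<Rightarrow> ('a \<Rightarrow> 'b) \<Rightarrow> bool" where
  "smod_hom R M N f \<longleftrightarrow>
     (\<forall>x\<in>scar M. f x \<in> scar N) \<and>
     (\<forall>x\<in>scar M. \<forall>y\<in>scar M. seqv M x y \<longrightarrow> seqv N (f x) (f y)) \<and>
     (\<forall>x\<in>scar M. \<forall>y\<in>scar M. seqv N (f (sadd M x y)) (sadd N (f x) (f y))) \<and>
     (\<forall>a\<in>R. \<forall>x\<in>scar M. seqv N (f (sact M a x)) (sact N a (f x)))"

definition exact_at :: "('a, 'r) ssmod \<Rightarrow> ('b, 'r) ssmod \<Rightarrow> ('c, 'r) ssmod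
                        \<Rightarrow> ('a \<Rightarrow> 'b) \<Rightarrow> ('b \<Rightarrow> 'c) \<Rightarrow> bool" where
  "exact_at M N P f g \<longleftrightarrow>
     (\<forall>y\<in>scar N. seqv P (g y) (szero P) \<longleftrightarrow> (\<exists>x\<in>scar M. seqv N (f x) y))"

definition exact_inj :: "('a, 'r) ssmod \<Rightarrow> ('b, 'r) ssmod \<Rightarrow> ('a \<Rightarrow> 'b) \<Rightarrow> bool" where
  "exact_inj M N f \<longleftrightarrow> (\<forall>x\<in>scar M. seqv N (f x) (szero N) \<longrightarrow> seqv M x (szero M))"

definition exact_surj :: "('a, 'r) ssmod \<Rightarrow> ('b, 'r) ssmod \<Rightarrow> ('a \<Rightarrow> 'b) \<Rightarrow> bool" where
  "exact_surj M N f \<longleftrightarrow> (\<forall>z\<in>scar N. \<exists>y\<in>scar M. seqv N (f y) z)"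

definition exact6 :: "'r set \<Rightarrow> ('a1, 'r) ssmod \<Rightarrow> ('a2, 'r) ssmod \<Rightarrow> ('a3, 'r) ssmod
     \<Rightarrow> ('a4, 'r) ssmod \<Rightarrow> ('a5, 'r) ssmod \<Rightarrow> ('a6, 'r) ssmod
     \<Rightarrow> ('a1 \<Rightarrow> 'a2) \<Rightarrow> ('a2 \<Rightarrow> 'a3) \<Rightarrow> ('a3 \<Rightarrow> 'a4) \<Rightarrow> ('a4 \<Rightarrow> 'a5) \<Rightarrow> ('a5 \<Rightarrow> 'a6) \<Rightarrow> bool" where
  "exact6 R M1 M2 M3 M4 M5 M6 f1 f2 f3 f4 f5 \<longleftrightarrow>
     smod_hom R M1 M2 f1 \<and> smod_hom R M2 M3 f2 \<and> smod_hom R M3 M4 f3 \<and>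
     smod_hom R M4 M5 f4 \<and> smod_hom R M5 M6 f5 \<and>
     exact_inj M1 M2 f1 \<and> exact_at M1 M2 M3 f1 f2 \<and> exact_at M2 M3 M4 f2 f3 \<and>
     exact_at M3 M4 M5 f3 f4 \<and> exact_at M4 M5 M6 f4 f5 \<and> exact_surj M5 M6 f5"

(* block lower-triangular matrix [[P, 0], [B, C]] with P of size d x d *)
definition blk :: "nat \<Rightarrow> 'k::field tmatrix \<Rightarrow> 'k tmatrix \<Rightarrow> 'k tmatrix \<Rightarrow> 'k tmatrix" where
  "blk d P B C = (\<lambda>i j. if i < d then (if j < d then P i j else 0)
                        else (if j < d then B (i - d) j else C (i - d) (j - d)))"

(* i = [0; I_e], a (d+e) x e matrix *)
definition incl_mat :: "nat \<Rightarrow> nat \<Rightarrow> 'k::field tmatrix" where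
  "incl_mat d e = (\<lambda>i j. if d \<le> i \<and> i < d + e \<and> j = i - d then 1 else 0)"

(* pi = [I_d 0], a d x (d+e) matrix *)
definition proj_mat :: "nat \<Rightarrow> 'k::field tmatrix" where
  "proj_mat d = (\<lambda>i j. if i = j \<and> i < d then 1 else 0)"

definition ext_tmat :: "nat \<Rightarrow> 'k::field tmatrix \<Rightarrow> ('k poly \<Rightarrow> 'k tmatrix) \<Rightarrow> 'k tmatrix \<Rightarrow> 'k tmatrix" where
  "ext_tmat d T \<delta> S = blk d T (\<delta> [:0, 1:]) S"

end

theory Submission
  imports Defs
begin

locale tw = fixes q :: nat and ty :: "'k::field itself"
  assumes qpos: "0 < q" and frob: "((x::'k) + y) ^ q = x ^ q + y ^ q"
begin

abbreviation tm :: "'k poly \<Rightarrow> 'k poly \<Rightarrow> 'k poly" where "tm \<equiv> tmult q"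

lemma frobi: "((x::'k) + y) ^ (q ^ i) = x ^ (q ^ i) + y ^ (q ^ i)"
proof (induction i)
  case (Suc i)
  have "(x + y) ^ (q ^ Suc i) = ((x + y) ^ (q ^ i)) ^ q"
    by (simp add: power_mult[symmetric] mult.commute)
  also have "\<dots> = (x ^ (q ^ i)) ^ q + (y ^ (q ^ i)) ^ q" using Suc frob by simp
  finally show ?case by (simp add: power_mult[symmetric] mult.commute)
qed simp

lemma fr0: "(0::'k) ^ (q ^ i) = 0" using qpos by (simp add: power_0_left)

lemma fq_pow: "(c::'k) ^ q = c \<Longrightarrow> c ^ (q ^ i) = c"
proof (induction i)
  case (Suc i)
  have "c ^ (q ^ Suc i) = (c ^ q) ^ (q ^ i)" by (simp add: power_mult)
  then show ?case using Suc by simp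
qed simp

definition sig :: "nat \<Rightarrow> 'k poly \<Rightarrow> 'k poly" where
  "sig i g = map_poly (\<lambda>c. c ^ (q ^ i)) g"

lemma coeff_sig: "coeff (sig i g) k = coeff g k ^ (q ^ i)"
  unfolding sig_def using fr0 by (simp add: coeff_map_poly)

lemma sig_add: "sig i ((f::'k poly) + g) = sig i f + sig i g"
  by (rule poly_eqI) (simp add: coeff_sig frobi)

lemma sig_0[simp]: "sig i 0 = 0"
  by (rule poly_eqI) (simp add: coeff_sig fr0 qpos)

lemma smult_sum_right: "smult c (\<Sum>k\<in>K. F k) = (\<Sum>k\<in>K. smult c (F k))"
  by (induction K rule: infinite_finite_induct) (auto simp: smult_add_right)

lemma sig_1[simp]: "sig i 1 = 1"
  by (rule poly_eqI) (simp add: coeff_sig coeff_1 qpos)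

lemma sig_monom: "sig i (monom b j) = monom (b ^ (q ^ i)) j"
  by (rule poly_eqI) (simp add: coeff_sig coeff_monom fr0)

lemma sig_smult: "sig i (smult c g) = smult (c ^ (q ^ i)) (sig i g)"
  by (rule poly_eqI) (simp add: coeff_sig power_mult_distrib)

lemma sig_0i: "sig 0 g = g"
  by (rule poly_eqI) (simp add: coeff_sig)

lemma tmult_sig: "tm f g = (\<Sum>i\<le>degree f. monom (coeff f i) i * sig i g)"
  unfolding tmult_def sig_def ..

lemma tmult_bound:
  assumes "degree f \<le> N"
  shows "tm f g = (\<Sum>i\<le>N. monom (coeff f i) i * sig i g)"
  unfolding tmult_sig
  by (rule sum.mono_neutral_left) (use assms in \<open>auto intro!: coeff_eq_0\<close>)

lemma tmult_add_left: "tm (f + g) h = tm f h + tm g h"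
proof -
  define N where "N = max (degree f) (degree g)"
  have "degree (f + g) \<le> N" unfolding N_def by (rule degree_add_le_max)
  then have "tm (f + g) h = (\<Sum>i\<le>N. monom (coeff (f + g) i) i * sig i h)"
    by (rule tmult_bound)
  also have "\<dots> = (\<Sum>i\<le>N. monom (coeff f i) i * sig i h) + (\<Sum>i\<le>N. monom (coeff g i) i * sig i h)"
    by (simp add: add_monom[symmetric] distrib_right sum.distrib)
  also have "\<dots> = tm f h + tm g h"
    by (simp add: tmult_bound[symmetric] N_def)
  finally show ?thesis .
qed

lemma tmult_add_right: "tm f (g + h) = tm f g + tm f h"
  unfolding tmult_sig by (simp add: sig_add distrib_left sum.distrib)

lemma tmult_0_left[simp]: "tm 0 g = 0"
  unfolding tmult_sig by simp

lemma tmult_0_right[simp]: "tm f 0 = 0"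
  unfolding tmult_sig by simp

lemma tmult_neg_left: "tm (- f) g = - tm f g"
  using tmult_add_left[of "-f" f g] by (simp add: eq_neg_iff_add_eq_0)

lemma tmult_neg_right: "tm f (- g) = - tm f g"
  using tmult_add_right[of f "-g" g] by (simp add: eq_neg_iff_add_eq_0)

lemma tmult_diff_left: "tm (f - g) h = tm f h - tm g h"
  using tmult_add_left[of f "-g" h] by (simp add: tmult_neg_left)

lemma tmult_diff_right: "tm f (g - h) = tm f g - tm f h"
  using tmult_add_right[of f g "-h"] by (simp add: tmult_neg_right)

lemma tmult_sum_left: "tm (\<Sum>k\<in>K. F k) g = (\<Sum>k\<in>K. tm (F k) g)"
  by (induction K rule: infinite_finite_induct) (auto simp: tmult_add_left)

lemma tmult_sum_right: "tm f (\<Sum>k\<in>K. F k) = (\<Sum>k\<in>K. tm f (F k))"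
  by (induction K rule: infinite_finite_induct) (auto simp: tmult_add_right)

lemma tmult_monom_left: "tm (monom a i) g = monom a i * sig i g"
proof -
  have "tm (monom a i) g = (\<Sum>k\<le>i. monom (coeff (monom a i) k) k * sig k g)"
    by (rule tmult_bound) (simp add: degree_monom_le)
  also have "\<dots> = (\<Sum>k\<le>i. if k = i then monom a i * sig i g else 0)"
    by (rule sum.cong) (auto simp: coeff_monom)
  finally show ?thesis by simp
qed

lemma tmult_monom_monom: "tm (monom a i) (monom b j) = monom (a * b ^ (q ^ i)) (i + j)"
  by (simp add: tmult_monom_left sig_monom mult_monom)

lemma tmult_assoc_monom:
  "tm (tm (monom a i) (monom b j)) (monom c k) = tm (monom a i) (tm (monom b j) (monom c k))"
  by (simp add: tmult_monom_monom power_mult_distrib power_add power_mult[symmetric] mult.assoc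
      mult.commute[of "q ^ j" "q ^ i"] add.assoc)

lemma tmult_assoc: "tm (tm f g) h = tm f (tm g h)"
proof -
  let ?f = "\<lambda>i. monom (coeff f i) i" and ?g = "\<lambda>i. monom (coeff g i) i" and ?h = "\<lambda>i. monom (coeff h i) i"
  have f: "f = (\<Sum>i\<le>degree f. ?f i)" and g: "g = (\<Sum>i\<le>degree g. ?g i)" and h: "h = (\<Sum>i\<le>degree h. ?h i)"
    by (simp_all add: poly_as_sum_of_monoms)
  have "tm (tm (\<Sum>i\<le>degree f. ?f i) (\<Sum>i\<le>degree g. ?g i)) (\<Sum>i\<le>degree h. ?h i) =
        tm (\<Sum>i\<le>degree f. ?f i) (tm (\<Sum>i\<le>degree g. ?g i) (\<Sum>i\<le>degree h. ?h i))"
    by (simp add: tmult_sum_left tmult_sum_right tmult_assoc_monom)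
  then show ?thesis using f g h by simp
qed

lemma tmult_1_left[simp]: "tm 1 g = g"
  using tmult_monom_left[of 1 0 g] by (simp add: sig_0i monom_0 one_pCons)

lemma tmult_1_right[simp]: "tm f 1 = f"
  unfolding tmult_sig by (simp add: poly_as_sum_of_monoms)

lemma tmult_smult_left: "tm (smult c f) g = smult c (tm f g)"
proof -
  have "tm (smult c f) g = (\<Sum>i\<le>degree f. monom (coeff (smult c f) i) i * sig i g)"
    by (rule tmult_bound) simp
  also have "\<dots> = smult c (tm f g)"
    by (simp add: tmult_sig smult_sum_right smult_monom[symmetric])
  finally show ?thesis .
qed

lemma tmult_smult_right: "(c::'k) ^ q = c \<Longrightarrow> tm f (smult c g) = smult c (tm f g)"
  unfolding tmult_sig by (simp add: sig_smult fq_pow smult_sum_right)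

end

context tw begin

abbreviation mm :: "nat \<Rightarrow> 'k tmatrix \<Rightarrow> 'k tmatrix \<Rightarrow> 'k tmatrix" where "mm \<equiv> mmul q"
abbreviation tv :: "nat \<Rightarrow> 'k tmatrix \<Rightarrow> 'k poly \<Rightarrow> 'k tmatrix" where "tv \<equiv> tev q"

lemma mmul_assoc: "mm n (mm m A B) C = mm m A (mm n B C)"
  unfolding mmul_def
  by (simp add: tmult_sum_left tmult_sum_right tmult_assoc fun_eq_iff, intro allI, rule sum.swap)

lemma mmul_madd_left: "mm n (madd A B) C = madd (mm n A C) (mm n B C)"
  unfolding mmul_def madd_def by (simp add: tmult_add_left sum.distrib fun_eq_iff)

lemma mmul_madd_right: "mm n C (madd A B) = madd (mm n C A) (mm n C B)"
  unfolding mmul_def madd_def by (simp add: tmult_add_right sum.distrib fun_eq_iff)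

lemma mmul_msub_left: "mm n (msub A B) C = msub (mm n A C) (mm n B C)"
  unfolding mmul_def msub_def by (simp add: tmult_diff_left sum_subtractf fun_eq_iff)

lemma mmul_msub_right: "mm n C (msub A B) = msub (mm n C A) (mm n C B)"
  unfolding mmul_def msub_def by (simp add: tmult_diff_right sum_subtractf fun_eq_iff)

lemma mmul_mneg_left: "mm n (mneg A) C = mneg (mm n A C)"
  unfolding mmul_def mneg_def by (simp add: tmult_neg_left sum_negf fun_eq_iff)

lemma mmul_mneg_right: "mm n C (mneg A) = mneg (mm n C A)"
  unfolding mmul_def mneg_def by (simp add: tmult_neg_right sum_negf fun_eq_iff)

lemma mmul_mzero_left[simp]: "mm n mzero C = mzero"
  unfolding mmul_def mzero_def by simp

lemma mmul_mzero_right[simp]: "mm n C mzero = mzero"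
  unfolding mmul_def mzero_def by simp

lemma mmul_mscal_left: "mm n (mscal c A) B = mscal c (mm n A B)"
  unfolding mmul_def mscal_def by (simp add: tmult_smult_left smult_sum_right fun_eq_iff)

lemma mmul_mscal_right: "c ^ q = c \<Longrightarrow> mm n A (mscal c B) = mscal c (mm n A B)"
  unfolding mmul_def mscal_def by (simp add: tmult_smult_right smult_sum_right fun_eq_iff)

lemma mmul_msum_left: "mm n (\<lambda>i j. \<Sum>k\<in>K. F k i j) B = (\<lambda>i j. \<Sum>k\<in>K. mm n (F k) B i j)"
  unfolding mmul_def by (simp add: tmult_sum_left fun_eq_iff, intro allI, rule sum.swap)

lemma mmul_msum_right: "mm n B (\<lambda>i j. \<Sum>k\<in>K. F k i j) = (\<lambda>i j. \<Sum>k\<in>K. mm n B (F k) i j)"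
  unfolding mmul_def by (simp add: tmult_sum_right fun_eq_iff, intro allI, rule sum.swap)

lemma tmat_mmul: "tmat m n' A \<Longrightarrow> tmat n'' p B \<Longrightarrow> tmat m p (mm n A B)"
  unfolding tmat_def mmul_def by auto

lemma tmat_madd: "tmat m n A \<Longrightarrow> tmat m n B \<Longrightarrow> tmat m n (madd A B)"
  unfolding tmat_def madd_def by auto

lemma tmat_msub: "tmat m n A \<Longrightarrow> tmat m n B \<Longrightarrow> tmat m n (msub A B)"
  unfolding tmat_def msub_def by auto

lemma tmat_mneg: "tmat m n A \<Longrightarrow> tmat m n (mneg A)"
  unfolding tmat_def mneg_def by auto

lemma tmat_mscal: "tmat m n A \<Longrightarrow> tmat m n (mscal c A)"
  unfolding tmat_def mscal_def by auto

lemma tmat_mzero[simp]: "tmat m n mzero"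
  unfolding tmat_def mzero_def by auto

lemma tmat_mone: "tmat n n (mone n)"
  unfolding tmat_def mone_def by auto

lemma mone_left: "tmat n p B \<Longrightarrow> mm n (mone n) B = B"
proof -
  assume B: "tmat n p B"
  have "(\<Sum>k<n. tm (if i = k \<and> i < n then 1 else 0) (B k j)) = B i j" for i j
  proof (cases "i < n")
    case True
    have "(\<Sum>k<n. tm (if i = k \<and> i < n then 1 else 0) (B k j)) = (\<Sum>k<n. if k = i then B i j else 0)"
      by (rule sum.cong) auto
    then show ?thesis using True by simp
  next
    case False
    then show ?thesis using B unfolding tmat_def by simp
  qed
  then show ?thesis unfolding mmul_def mone_def by (simp add: fun_eq_iff)
qed

lemma mone_right: "tmat m n A \<Longrightarrow> mm n A (mone n) = A"
proof -
  assume A: "tmat m n A"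
  have "(\<Sum>k<n. tm (A i k) (if k = j \<and> k < n then 1 else 0)) = A i j" for i j
  proof (cases "j < n")
    case True
    have "(\<Sum>k<n. tm (A i k) (if k = j \<and> k < n then 1 else 0)) = (\<Sum>k<n. if k = j then A i j else 0)"
      by (rule sum.cong) auto
    then show ?thesis using True by simp
  next
    case False
    then show ?thesis using A unfolding tmat_def by simp
  qed
  then show ?thesis unfolding mmul_def mone_def by (simp add: fun_eq_iff)
qed

lemma sum_split_add: "(\<Sum>k<d + (e::nat). f k) = (\<Sum>k<d. f k) + (\<Sum>k<e. f (d + k))"
  by (induction e) (auto simp: add.assoc)

lemma E1: "mm e (incl_mat d e) f = (\<lambda>r j. if d \<le> r \<and> r < d + e then f (r - d) j else 0)"
proof -
  have "(\<Sum>k<e. tm (if d \<le> r \<and> r < d + e \<and> k = r - d then 1 else 0) (f k j)) =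
        (if d \<le> r \<and> r < d + e then f (r - d) j else 0)" for r j
  proof -
    have "(\<Sum>k<e. tm (if d \<le> r \<and> r < d + e \<and> k = r - d then 1 else 0) (f k j)) =
          (\<Sum>k<e. if k = r - d then (if d \<le> r \<and> r < d + e then f (r - d) j else 0) else 0)"
      by (rule sum.cong) auto
    then show ?thesis by auto
  qed
  then show ?thesis unfolding mmul_def incl_mat_def by (simp add: fun_eq_iff)
qed

lemma E2: "mm (d + e) h (incl_mat d e) = (\<lambda>r c. if c < e then h r (d + c) else 0)"
proof -
  have "(\<Sum>k<d + e. tm (h r k) (if d \<le> k \<and> k < d + e \<and> c = k - d then 1 else 0)) =
        (if c < e then h r (d + c) else 0)" for r c
  proof -
    have "(\<Sum>k<d + e. tm (h r k) (if d \<le> k \<and> k < d + e \<and> c = k - d then 1 else 0)) =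
          (\<Sum>k<d + e. if k = d + c then (if c < e then h r (d + c) else 0) else 0)"
      by (rule sum.cong) auto
    then show ?thesis by auto
  qed
  then show ?thesis unfolding mmul_def incl_mat_def by (simp add: fun_eq_iff)
qed

lemma E3: "mm n (proj_mat d) h = (\<lambda>r j. if r < d \<and> r < n then h r j else 0)"
proof -
  have "(\<Sum>k<n. tm (if r = k \<and> r < d then 1 else 0) (h k j)) = (if r < d \<and> r < n then h r j else 0)" for r j
  proof -
    have "(\<Sum>k<n. tm (if r = k \<and> r < d then 1 else 0) (h k j)) =
          (\<Sum>k<n. if k = r then (if r < d then h r j else 0) else 0)"
      by (rule sum.cong) auto
    then show ?thesis by auto
  qed
  then show ?thesis unfolding mmul_def proj_mat_def by (simp add: fun_eq_iff)
qed

lemma E4: "mm n h (proj_mat d) = (\<lambda>r c. if c < d \<and> c < n then h r c else 0)"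
proof -
  have "(\<Sum>k<n. tm (h r k) (if k = c \<and> k < d then 1 else 0)) = (if c < d \<and> c < n then h r c else 0)" for r c
  proof -
    have "(\<Sum>k<n. tm (h r k) (if k = c \<and> k < d then 1 else 0)) =
          (\<Sum>k<n. if k = c then (if c < d then h r c else 0) else 0)"
      by (rule sum.cong) auto
    then show ?thesis by auto
  qed
  then show ?thesis unfolding mmul_def proj_mat_def by (simp add: fun_eq_iff)
qed

lemma B1: "mm (d + e) (blk d P B C) V =
  (\<lambda>r j. if r < d then mm d P V r j else mm d B V (r - d) j + mm e C (\<lambda>k j. V (d + k) j) (r - d) j)"
proof -
  have "(\<Sum>k<d + e. tm (blk d P B C r k) (V k j)) =
     (if r < d then mm d P V r j else mm d B V (r - d) j + mm e C (\<lambda>k j. V (d + k) j) (r - d) j)" for r j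
    unfolding sum_split_add by (simp add: blk_def mmul_def)
  then show ?thesis unfolding mmul_def[of q "d + e"] by (simp add: fun_eq_iff)
qed

lemma B2: "mm (d + e) H (blk d P B C) =
  (\<lambda>r c. if c < d then mm d H P r c + mm e (\<lambda>r k. H r (d + k)) B r c
         else mm e (\<lambda>r k. H r (d + k)) C r (c - d))"
proof -
  have "(\<Sum>k<d + e. tm (H r k) (blk d P B C k c)) =
     (if c < d then mm d H P r c + mm e (\<lambda>r k. H r (d + k)) B r c
         else mm e (\<lambda>r k. H r (d + k)) C r (c - d))" for r c
    unfolding sum_split_add by (simp add: blk_def mmul_def)
  then show ?thesis unfolding mmul_def[of q "d + e"] by (simp add: fun_eq_iff)
qed

end

context tw begin

lemma tev_bound:
  assumes "degree a \<le> N"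
  shows "tv n M a = (\<lambda>i j. \<Sum>k\<le>N. smult (coeff a k) (mpow q n M k i j))"
  unfolding tev_def
  by (rule ext, rule ext, rule sum.mono_neutral_left) (use assms in \<open>auto intro!: coeff_eq_0\<close>)

lemma tev_add: "tv n M (a + b) = madd (tv n M a) (tv n M b)"
proof -
  define N where "N = max (degree a) (degree b)"
  have "tv n M (a + b) = (\<lambda>i j. \<Sum>k\<le>N. smult (coeff (a + b) k) (mpow q n M k i j))"
    by (rule tev_bound) (simp add: N_def degree_add_le_max)
  also have "\<dots> = madd (\<lambda>i j. \<Sum>k\<le>N. smult (coeff a k) (mpow q n M k i j))
                        (\<lambda>i j. \<Sum>k\<le>N. smult (coeff b k) (mpow q n M k i j))"
    unfolding madd_def by (simp add: smult_add_left sum.distrib)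
  also have "\<dots> = madd (tv n M a) (tv n M b)"
    by (subst (1 2) tev_bound[where N = N]) (auto simp: N_def)
  finally show ?thesis .
qed

lemma tev_smult: "tv n M (smult c a) = mscal c (tv n M a)"
proof -
  have "tv n M (smult c a) = (\<lambda>i j. \<Sum>k\<le>degree a. smult (coeff (smult c a) k) (mpow q n M k i j))"
    by (rule tev_bound) simp
  then show ?thesis unfolding mscal_def tev_def by (simp add: smult_sum_right)
qed

lemma tev_0[simp]: "tv n M 0 = mzero"
  unfolding tev_def mzero_def by simp

lemma tev_const: "tv n M [:c:] = mscal c (mone n)"
  unfolding tev_def mscal_def by simp

lemma tev_1: "tv n M 1 = mone n"
  unfolding tev_def by (simp add: fun_eq_iff)

lemma mpow_tmat: assumes "tmat n n (M::'k tmatrix)" shows "tmat n n (mpow q n M k)"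
proof (induction k)
  case 0
  then show ?case by (simp add: tmat_mone)
next
  case (Suc k)
  show ?case using tmat_mmul[OF assms Suc.IH] by simp
qed

lemma tev_tmat: assumes "tmat n n M" shows "tmat n n (tv n M a)"
proof -
  have "\<forall>k. tmat n n (mpow q n M k)" using mpow_tmat[OF assms] by blast
  then show ?thesis unfolding tev_def tmat_def by simp
qed

lemma mpow_Suc_right: "tmat n n M \<Longrightarrow> mpow q n M (Suc k) = mm n (mpow q n M k) M"
proof (induction k)
  case 0
  then show ?case by (simp add: mone_left mone_right)
next
  case (Suc k)
  have "mpow q n M (Suc (Suc k)) = mm n M (mm n (mpow q n M k) M)" using Suc by simp
  also have "\<dots> = mm n (mpow q n M (Suc k)) M" by (simp add: mmul_assoc)
  finally show ?case .
qed

lemma tev_pCons0: assumes "tmat n n M" shows "tv n M (pCons 0 a) = mm n (tv n M a) M"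
proof -
  have "tv n M (pCons 0 a) = (\<lambda>i j. \<Sum>k\<le>Suc (degree a). smult (coeff (pCons 0 a) k) (mpow q n M k i j))"
    by (rule tev_bound) (simp add: degree_pCons_le)
  also have "\<dots> = (\<lambda>i j. \<Sum>k\<le>degree a. smult (coeff a k) (mpow q n M (Suc k) i j))"
    by (subst sum.atMost_Suc_shift) (simp del: sum.atMost_Suc mpow.simps)
  also have "\<dots> = (\<lambda>i j. \<Sum>k\<le>degree a. mm n (mscal (coeff a k) (mpow q n M k)) M i j)"
    by (simp add: mpow_Suc_right[OF assms] mmul_mscal_left del: mpow.simps, simp add: mscal_def)
  also have "\<dots> = mm n (tv n M a) M"
    unfolding tev_def mmul_msum_left[symmetric] mscal_def ..
  finally show ?thesis .
qed

lemma tev_t: "tmat n n M \<Longrightarrow> tv n M [:0, 1:] = M"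
proof -
  assume M: "tmat n n M"
  show ?thesis using tev_pCons0[OF M, of 1] M by (simp add: tev_const mone_left one_pCons mscal_def)
qed

lemma Fq_pow: "c \<in> Fq q \<Longrightarrow> c ^ q = c"
  unfolding Fq_def by simp

lemma Aq_coeff: "a \<in> Aq q \<Longrightarrow> coeff a k ^ q = coeff a k"
  unfolding Aq_def Fq_def by simp

lemma hom_mpow: assumes "tmat d e h" "mm e h S = mm d T h"
  shows "mm e h (mpow q e S k) = mm d (mpow q d T k) h"
proof (induction k)
  case 0
  then show ?case using assms(1) by (simp add: mone_left mone_right)
next
  case (Suc k)
  have "mm e h (mpow q e S (Suc k)) = mm e (mm e h S) (mpow q e S k)" by (simp add: mmul_assoc)
  also have "\<dots> = mm d T (mm e h (mpow q e S k))" by (simp add: assms(2) mmul_assoc)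
  also have "\<dots> = mm d (mpow q d T (Suc k)) h" by (simp add: Suc mmul_assoc)
  finally show ?case .
qed

lemma hom_tev: assumes "tmat d e h" "mm e h S = mm d T h" "b \<in> Aq q"
  shows "mm e h (tv e S b) = mm d (tv d T b) h"
proof -
  have "mm e h (tv e S b) = (\<lambda>i j. \<Sum>k\<le>degree b. mm e h (mscal (coeff b k) (mpow q e S k)) i j)"
    unfolding tev_def mmul_msum_right[symmetric] mscal_def ..
  also have "\<dots> = (\<lambda>i j. \<Sum>k\<le>degree b. mm d (mscal (coeff b k) (mpow q d T k)) h i j)"
    by (simp add: mmul_mscal_right mmul_mscal_left Aq_coeff[OF assms(3)] hom_mpow[OF assms(1,2)])
  also have "\<dots> = mm d (tv d T b) h"
    unfolding tev_def mmul_msum_left[symmetric] mscal_def ..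
  finally show ?thesis .
qed

lemma pCons_split: "pCons c a = [:c:] + pCons 0 a"
  by simp

lemma tev_mult: assumes M: "tmat n n M" and b: "b \<in> Aq q"
  shows "tv n M (a * b) = mm n (tv n M a) (tv n M b)"
proof (induction a)
  case 0
  then show ?case by simp
next
  case (pCons c a)
  have comm: "mm n M (tv n M b) = mm n (tv n M b) M"
    by (rule hom_tev[OF M refl b])
  have "tv n M (pCons c a * b) = madd (mscal c (tv n M b)) (mm n (mm n (tv n M a) (tv n M b)) M)"
    by (simp add: tev_add tev_smult tev_pCons0[OF M] pCons.IH)
  also have "\<dots> = mm n (madd (mscal c (mone n)) (mm n (tv n M a) M)) (tv n M b)"
    by (simp add: mmul_madd_left mmul_mscal_left mone_left[OF tev_tmat[OF M]] mmul_assoc comm)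
  also have "madd (mscal c (mone n)) (mm n (tv n M a) M) = tv n M (pCons c a)"
    by (subst pCons_split, subst tev_add) (simp add: tev_const tev_pCons0[OF M])
  finally show ?case .
qed

end

context tw begin

abbreviation tt :: "'k poly" where "tt \<equiv> [:0, 1:]"
abbreviation AQ :: "'k poly set" where "AQ \<equiv> Aq q"
abbreviation FQ :: "'k set" where "FQ \<equiv> Fq q"
abbreviation Dr :: "nat \<Rightarrow> 'k tmatrix \<Rightarrow> nat \<Rightarrow> 'k tmatrix \<Rightarrow> ('k poly \<Rightarrow> 'k tmatrix) set"
  where "Dr \<equiv> Der q"

lemma Fq_0: "(0::'k) \<in> FQ" unfolding Fq_def using qpos by (simp add: power_0_left)
lemma Fq_1: "(1::'k) \<in> FQ" unfolding Fq_def by simp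

lemma Aq_pCons: "pCons c a \<in> AQ \<longleftrightarrow> c \<in> FQ \<and> (a::'k poly) \<in> AQ"
  unfolding Aq_def by (auto simp: coeff_pCons split: nat.splits)

lemma Aq_0: "(0::'k poly) \<in> AQ" unfolding Aq_def using Fq_0 by simp
lemma Aq_const: "c \<in> FQ \<Longrightarrow> [:c:] \<in> AQ" using Aq_pCons Aq_0 by simp
lemma Aq_1: "(1::'k poly) \<in> AQ" using Aq_const[OF Fq_1] by (simp add: one_pCons)
lemma Aq_t: "tt \<in> AQ" using Aq_pCons Aq_const Fq_0 Fq_1 by simp

lemma Der_tmat: "\<delta> \<in> Dr m A n B \<Longrightarrow> a \<in> AQ \<Longrightarrow> tmat n m (\<delta> a)"
  unfolding Der_def by blast
lemma Der_add: "\<delta> \<in> Dr m A n B \<Longrightarrow> a \<in> AQ \<Longrightarrow> b \<in> AQ \<Longrightarrow> \<delta> (a + b) = madd (\<delta> a) (\<delta> b)"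
  unfolding Der_def by blast
lemma Der_smult: "\<delta> \<in> Dr m A n B \<Longrightarrow> c \<in> FQ \<Longrightarrow> a \<in> AQ \<Longrightarrow> \<delta> (smult c a) = mscal c (\<delta> a)"
  unfolding Der_def by blast
lemma Der_mult: "\<delta> \<in> Dr m A n B \<Longrightarrow> a \<in> AQ \<Longrightarrow> b \<in> AQ \<Longrightarrow>
   \<delta> (a * b) = madd (mm n (tv n B a) (\<delta> b)) (mm m (\<delta> a) (tv m A b))"
  unfolding Der_def by blast

lemma DerI:
  assumes "\<And>a. a \<in> AQ \<Longrightarrow> tmat n m (\<delta> a)"
    and "\<And>a b. a \<in> AQ \<Longrightarrow> b \<in> AQ \<Longrightarrow> \<delta> (a + b) = madd (\<delta> a) (\<delta> b)"
    and "\<And>c a. c \<in> FQ \<Longrightarrow> a \<in> AQ \<Longrightarrow> \<delta> (smult c a) = mscal c (\<delta> a)"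
    and "\<And>a b. a \<in> AQ \<Longrightarrow> b \<in> AQ \<Longrightarrow>
           \<delta> (a * b) = madd (mm n (tv n B a) (\<delta> b)) (mm m (\<delta> a) (tv m A b))"
  shows "\<delta> \<in> Dr m A n B"
  unfolding Der_def using assms by blast

lemma madd_self: "madd X X = X \<Longrightarrow> X = (mzero :: 'k tmatrix)"
  unfolding madd_def mzero_def fun_eq_iff by (metis add_cancel_left_right)

lemma Der_1: assumes "\<delta> \<in> Dr m A n B" shows "\<delta> 1 = mzero"
proof -
  have "\<delta> (1 * 1) = madd (mm n (tv n B 1) (\<delta> 1)) (mm m (\<delta> 1) (tv m A 1))"
    by (rule Der_mult[OF assms Aq_1 Aq_1])
  then have "\<delta> 1 = madd (\<delta> 1) (\<delta> 1)"
    using Der_tmat[OF assms Aq_1] by (simp add: tev_1 mone_left mone_right)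
  then show ?thesis using madd_self by metis
qed

lemma Der_0: assumes "\<delta> \<in> Dr m A n B" shows "\<delta> 0 = mzero"
proof -
  have "\<delta> (0 + 0) = madd (\<delta> 0) (\<delta> 0)" by (rule Der_add[OF assms Aq_0 Aq_0])
  then show ?thesis using madd_self by (metis add_0)
qed

lemma Der_const: assumes "\<delta> \<in> Dr m A n B" "c \<in> FQ" shows "\<delta> [:c:] = mzero"
proof -
  have "\<delta> (smult c 1) = mscal c (\<delta> 1)" by (rule Der_smult[OF assms Aq_1])
  then show ?thesis using Der_1[OF assms(1)] by (simp add: mscal_def mzero_def one_pCons)
qed

lemma Der_unique:
  assumes "\<delta> \<in> Dr m A n B" "\<delta>' \<in> Dr m A n B" "\<delta> tt = \<delta>' tt"
  shows "a \<in> AQ \<Longrightarrow> \<delta> a = \<delta>' a"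
proof (induction a)
  case 0
  then show ?case using Der_0 assms by metis
next
  case (pCons c a)
  then have c: "c \<in> FQ" and a: "a \<in> AQ" using Aq_pCons by auto
  have ta: "tt * a \<in> AQ" using a c Aq_pCons Fq_0 by simp
  have eq: "pCons c a = [:c:] + tt * a" by simp
  have "\<delta> ([:c:] + tt * a) = madd (\<delta> [:c:]) (\<delta> (tt * a))" by (rule Der_add[OF assms(1) Aq_const[OF c] ta])
  also have "\<dots> = madd mzero (madd (mm n (tv n B tt) (\<delta> a)) (mm m (\<delta> tt) (tv m A a)))"
    by (simp only: Der_const[OF assms(1) c] Der_mult[OF assms(1) Aq_t a])
  finally have X: "\<delta> ([:c:] + tt * a) = madd mzero (madd (mm n (tv n B tt) (\<delta> a)) (mm m (\<delta> tt) (tv m A a)))" .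
  have "\<delta>' ([:c:] + tt * a) = madd (\<delta>' [:c:]) (\<delta>' (tt * a))" by (rule Der_add[OF assms(2) Aq_const[OF c] ta])
  also have "\<dots> = madd mzero (madd (mm n (tv n B tt) (\<delta>' a)) (mm m (\<delta>' tt) (tv m A a)))"
    by (simp only: Der_const[OF assms(2) c] Der_mult[OF assms(2) Aq_t a])
  finally have Y: "\<delta>' ([:c:] + tt * a) = madd mzero (madd (mm n (tv n B tt) (\<delta>' a)) (mm m (\<delta>' tt) (tv m A a)))" .
  have "\<delta> (pCons c a) = \<delta>' (pCons c a)"
    unfolding eq X Y using pCons.IH a assms(3) by simp
  then show ?case .
qed

end

context tw begin

lemma mpow_blk:
  "(i < m \<and> j < m \<longrightarrow> mpow q (m + n) (blk m A D B) k i j = mpow q m (A::'k tmatrix) k i j) \<and>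
   (i < m \<and> m \<le> j \<longrightarrow> mpow q (m + n) (blk m A D B) k i j = 0) \<and>
   (m \<le> i \<and> m \<le> j \<longrightarrow> mpow q (m + n) (blk m A D B) k i j = mpow q n B k (i - m) (j - m))"
proof (induction k arbitrary: i j)
  case 0
  then show ?case by (auto simp: mone_def)
next
  case (Suc k)
  let ?M = "blk m A D B" and ?V = "mpow q (m + n) (blk m A D B) k"
  have V: "mpow q (m + n) ?M (Suc k) = mm (m + n) ?M ?V" by simp
  have 1: "mpow q (m + n) ?M (Suc k) i j = mpow q m A (Suc k) i j" if "i < m" "j < m"
  proof -
    have "mpow q (m + n) ?M (Suc k) i j = (\<Sum>l<m. tm (A i l) (?V l j))"
      unfolding V B1 using that by (simp add: mmul_def)
    also have "\<dots> = (\<Sum>l<m. tm (A i l) (mpow q m A k l j))"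
      by (rule sum.cong) (use Suc.IH that in auto)
    finally show ?thesis by (simp add: mmul_def)
  qed
  have 2: "mpow q (m + n) ?M (Suc k) i j = 0" if "i < m" "m \<le> j"
  proof -
    have "mpow q (m + n) ?M (Suc k) i j = (\<Sum>l<m. tm (A i l) (?V l j))"
      unfolding V B1 using that by (simp add: mmul_def)
    also have "\<dots> = (\<Sum>l<m. 0)"
      by (rule sum.cong) (use Suc.IH that in auto)
    finally show ?thesis by simp
  qed
  have 3: "mpow q (m + n) ?M (Suc k) i j = mpow q n B (Suc k) (i - m) (j - m)" if "m \<le> i" "m \<le> j"
  proof -
    have "mpow q (m + n) ?M (Suc k) i j =
       (\<Sum>l<m. tm (D (i - m) l) (?V l j)) + (\<Sum>l<n. tm (B (i - m) l) (?V (m + l) j))"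
      unfolding V B1 using that by (simp add: mmul_def)
    also have "(\<Sum>l<m. tm (D (i - m) l) (?V l j)) = (\<Sum>l<m. 0)"
      by (rule sum.cong) (use Suc.IH that in auto)
    also have "(\<Sum>l<n. tm (B (i - m) l) (?V (m + l) j)) = (\<Sum>l<n. tm (B (i - m) l) (mpow q n B k l (j - m)))"
      by (rule sum.cong) (use Suc.IH that in auto)
    finally show ?thesis by (simp add: mmul_def)
  qed
  show ?case using 1 2 3 by blast
qed

lemma tev_blk1: "i < m \<Longrightarrow> j < m \<Longrightarrow> tv (m + n) (blk m A D B) a i j = tv m A a i j"
  unfolding tev_def using mpow_blk by simp

lemma tev_blk2: "i < m \<Longrightarrow> m \<le> j \<Longrightarrow> tv (m + n) (blk m (A::'k tmatrix) D B) a i j = 0"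
  unfolding tev_def using mpow_blk by simp

lemma tev_blk3: "m \<le> i \<Longrightarrow> m \<le> j \<Longrightarrow> tv (m + n) (blk m (A::'k tmatrix) D B) a i j = tv n B a (i - m) (j - m)"
  unfolding tev_def using mpow_blk by simp

lemma tmat_blk: "tmat m m A \<Longrightarrow> tmat n m D \<Longrightarrow> tmat n n B \<Longrightarrow> tmat (m + n) (m + n) (blk m (A::'k tmatrix) D B)"
  unfolding tmat_def blk_def by auto

definition ddv :: "nat \<Rightarrow> 'k tmatrix \<Rightarrow> nat \<Rightarrow> 'k tmatrix \<Rightarrow> 'k tmatrix \<Rightarrow> 'k poly \<Rightarrow> 'k tmatrix" where
  "ddv m A n B D a = (\<lambda>r c. if r < n \<and> c < m then tv (m + n) (blk m A D B) a (m + r) c else 0)"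

lemma tev_blk:
  assumes "tmat m m A" "tmat n m D" "tmat n n B"
  shows "tv (m + n) (blk m A D B) a = blk m (tv m A a) (ddv m A n B D a) (tv n B a)"
proof (intro ext)
  fix i j
  have T: "tmat (m + n) (m + n) (tv (m + n) (blk m A D B) a)"
    by (rule tev_tmat[OF tmat_blk[OF assms]])
  show "tv (m + n) (blk m A D B) a i j = blk m (tv m A a) (ddv m A n B D a) (tv n B a) i j"
    using T tev_blk1[of i m j n A D B a] tev_blk2[of i m j n A D B a] tev_blk3[of m i j n A D B a]
    unfolding blk_def ddv_def tmat_def by auto
qed

lemma ddv_Der:
  assumes A: "tmat m m A" and D: "tmat n m D" and B: "tmat n n B"
  shows "ddv m A n B D \<in> Dr m A n B" "ddv m A n B D tt = D"
proof -
  let ?M = "blk m A D B"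
  have TM: "tmat (m + n) (m + n) ?M" by (rule tmat_blk[OF assms])
  have dtm: "tmat n m (ddv m A n B D a)" for a unfolding ddv_def tmat_def by auto
  show "ddv m A n B D \<in> Dr m A n B"
  proof (rule DerI)
    fix a show "tmat n m (ddv m A n B D a)" by (rule dtm)
  next
    fix a b show "ddv m A n B D (a + b) = madd (ddv m A n B D a) (ddv m A n B D b)"
      unfolding ddv_def madd_def tev_add by (auto simp: fun_eq_iff)
  next
    fix c a show "ddv m A n B D (smult c a) = mscal c (ddv m A n B D a)"
      unfolding ddv_def mscal_def tev_smult by (auto simp: fun_eq_iff)
  next
    fix a b assume a: "a \<in> AQ" and b: "b \<in> AQ"
    show "ddv m A n B D (a * b) = madd (mm n (tv n B a) (ddv m A n B D b)) (mm m (ddv m A n B D a) (tv m A b))"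
    proof (intro ext)
      fix r c
      show "ddv m A n B D (a * b) r c = madd (mm n (tv n B a) (ddv m A n B D b)) (mm m (ddv m A n B D a) (tv m A b)) r c"
      proof (cases "r < n \<and> c < m")
        case True
        have "ddv m A n B D (a * b) r c = mm (m + n) (tv (m + n) ?M a) (tv (m + n) ?M b) (m + r) c"
          using True unfolding ddv_def tev_mult[OF TM b] by simp
        also have "\<dots> = (\<Sum>l<m. tm (tv (m + n) ?M a (m + r) l) (tv (m + n) ?M b l c)) +
                        (\<Sum>l<n. tm (tv (m + n) ?M a (m + r) (m + l)) (tv (m + n) ?M b (m + l) c))"
          unfolding mmul_def sum_split_add ..
        also have "(\<Sum>l<m. tm (tv (m + n) ?M a (m + r) l) (tv (m + n) ?M b l c)) =
                   (\<Sum>l<m. tm (ddv m A n B D a r l) (tv m A b l c))"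
          by (rule sum.cong) (use True in \<open>auto simp: ddv_def tev_blk1\<close>)
        also have "(\<Sum>l<n. tm (tv (m + n) ?M a (m + r) (m + l)) (tv (m + n) ?M b (m + l) c)) =
                   (\<Sum>l<n. tm (tv n B a r l) (ddv m A n B D b l c))"
          by (rule sum.cong) (use True in \<open>auto simp: ddv_def tev_blk3\<close>)
        finally show ?thesis unfolding madd_def mmul_def by (simp add: add.commute)
      next
        case False
        have t1: "tmat n m (mm n (tv n B a) (ddv m A n B D b))"
          by (rule tmat_mmul[OF tev_tmat[OF B] dtm])
        have t2: "tmat n m (mm m (ddv m A n B D a) (tv m A b))"
          by (rule tmat_mmul[OF dtm tev_tmat[OF A]])
        show ?thesis using False t1 t2 unfolding madd_def tmat_def by (auto simp: ddv_def)
      qed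
    qed
  qed
  show "ddv m A n B D tt = D"
  proof -
    have "tv (m + n) ?M tt = ?M" by (rule tev_t[OF TM])
    then show ?thesis using D unfolding ddv_def by (simp add: fun_eq_iff, simp add: blk_def tmat_def, meson not_le)
  qed
qed

lemma ext_blk:
  assumes "\<delta> \<in> Dr d T e S" "tmat d d T" "tmat e e S" "a \<in> AQ"
  shows "tv (d + e) (ext_tmat d T \<delta> S) a = blk d (tv d T a) (\<delta> a) (tv e S a)"
proof -
  have D: "tmat e d (\<delta> tt)" by (rule Der_tmat[OF assms(1) Aq_t])
  have "ddv d T e S (\<delta> tt) a = \<delta> a"
    by (rule Der_unique[OF ddv_Der(1)[OF assms(2) D assms(3)] assms(1) ddv_Der(2)[OF assms(2) D assms(3)] assms(4)])
  then show ?thesis unfolding ext_tmat_def tev_blk[OF assms(2) D assms(3)] by simp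
qed

lemma Der_exists:
  assumes "tmat m m A" "tmat n m D" "tmat n n B"
  shows "\<exists>\<xi>\<in>Dr m A n B. \<xi> tt = D"
  using ddv_Der[OF assms] by blast

end

context tw begin

lemmas mdefs = madd_def msub_def mneg_def mscal_def mzero_def

lemma der_neg: assumes "\<delta> \<in> Dr m A n B" shows "(\<lambda>a. mneg (\<delta> a)) \<in> Dr m A n B"
proof (rule DerI)
  fix a assume "a \<in> AQ" then show "tmat n m (mneg (\<delta> a))" using Der_tmat[OF assms] tmat_mneg by blast
next
  fix a b assume "a \<in> AQ" "b \<in> AQ"
  then show "mneg (\<delta> (a + b)) = madd (mneg (\<delta> a)) (mneg (\<delta> b))"
    using Der_add[OF assms] by (simp add: mdefs fun_eq_iff)
next
  fix c a assume "c \<in> FQ" "a \<in> AQ"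
  then show "mneg (\<delta> (smult c a)) = mscal c (mneg (\<delta> a))"
    using Der_smult[OF assms] by (simp add: mdefs fun_eq_iff)
next
  fix a b assume "a \<in> AQ" "b \<in> AQ"
  then show "mneg (\<delta> (a * b)) = madd (mm n (tv n B a) (mneg (\<delta> b))) (mm m (mneg (\<delta> a)) (tv m A b))"
    using Der_mult[OF assms] by (simp add: mmul_mneg_left mmul_mneg_right) (simp add: mdefs fun_eq_iff)
qed

lemma der_comp_left:
  assumes "\<delta> \<in> Dr m A n B" "tmat p n h" "mm n h B = mm p C h"
  shows "(\<lambda>a. mm n h (\<delta> a)) \<in> Dr m A p C"
proof (rule DerI)
  fix a assume "a \<in> AQ" then show "tmat p m (mm n h (\<delta> a))"
    using Der_tmat[OF assms(1)] tmat_mmul assms(2) by blast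
next
  fix a b assume "a \<in> AQ" "b \<in> AQ"
  then show "mm n h (\<delta> (a + b)) = madd (mm n h (\<delta> a)) (mm n h (\<delta> b))"
    using Der_add[OF assms(1)] by (simp add: mmul_madd_right)
next
  fix c a assume "c \<in> FQ" "a \<in> AQ"
  then show "mm n h (\<delta> (smult c a)) = mscal c (mm n h (\<delta> a))"
    using Der_smult[OF assms(1)] by (simp add: mmul_mscal_right Fq_pow)
next
  fix a b assume a: "a \<in> AQ" and b: "b \<in> AQ"
  have "mm n h (mm n (tv n B a) (\<delta> b)) = mm p (tv p C a) (mm n h (\<delta> b))"
    by (simp add: mmul_assoc[symmetric] hom_tev[OF assms(2,3) a])
  then show "mm n h (\<delta> (a * b)) = madd (mm p (tv p C a) (mm n h (\<delta> b))) (mm m (mm n h (\<delta> a)) (tv m A b))"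
    using Der_mult[OF assms(1) a b] by (simp add: mmul_madd_right mmul_assoc)
qed

lemma der_comp_right:
  assumes "\<delta> \<in> Dr m A n B" "tmat m m' h" "mm m' h A' = mm m A h"
  shows "(\<lambda>a. mm m (\<delta> a) h) \<in> Dr m' A' n B"
proof (rule DerI)
  fix a assume "a \<in> AQ" then show "tmat n m' (mm m (\<delta> a) h)"
    using Der_tmat[OF assms(1)] tmat_mmul assms(2) by blast
next
  fix a b assume "a \<in> AQ" "b \<in> AQ"
  then show "mm m (\<delta> (a + b)) h = madd (mm m (\<delta> a) h) (mm m (\<delta> b) h)"
    using Der_add[OF assms(1)] by (simp add: mmul_madd_left)
next
  fix c a assume "c \<in> FQ" "a \<in> AQ"
  then show "mm m (\<delta> (smult c a)) h = mscal c (mm m (\<delta> a) h)"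
    using Der_smult[OF assms(1)] by (simp add: mmul_mscal_left)
next
  fix a b assume a: "a \<in> AQ" and b: "b \<in> AQ"
  have "mm m (mm m (\<delta> a) (tv m A b)) h = mm m' (mm m (\<delta> a) h) (tv m' A' b)"
    by (simp add: mmul_assoc hom_tev[OF assms(2,3) b])
  then show "mm m (\<delta> (a * b)) h = madd (mm n (tv n B a) (mm m (\<delta> b) h)) (mm m' (mm m (\<delta> a) h) (tv m' A' b))"
    using Der_mult[OF assms(1) a b] by (simp add: mmul_madd_left mmul_assoc)
qed

lemma der_plus_inner:
  assumes D: "\<delta> \<in> Dr m A n B" and U: "tmat n m U" and A: "tmat m m A" and B: "tmat n n B"
  shows "(\<lambda>a. madd (\<delta> a) (msub (mm m U (tv m A a)) (mm n (tv n B a) U))) \<in> Dr m A n B"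
proof (rule DerI)
  fix a assume "a \<in> AQ" then show "tmat n m (madd (\<delta> a) (msub (mm m U (tv m A a)) (mm n (tv n B a) U)))"
    using Der_tmat[OF D] tmat_mmul tev_tmat[OF A] tev_tmat[OF B] U tmat_madd tmat_msub by metis
next
  fix a b assume "a \<in> AQ" "b \<in> AQ"
  then show "madd (\<delta> (a + b)) (msub (mm m U (tv m A (a + b))) (mm n (tv n B (a + b)) U)) =
    madd (madd (\<delta> a) (msub (mm m U (tv m A a)) (mm n (tv n B a) U)))
         (madd (\<delta> b) (msub (mm m U (tv m A b)) (mm n (tv n B b) U)))"
    using Der_add[OF D] by (simp add: tev_add mmul_madd_left mmul_madd_right) (simp add: mdefs fun_eq_iff algebra_simps)
next
  fix c a assume c: "c \<in> FQ" and "a \<in> AQ"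
  then show "madd (\<delta> (smult c a)) (msub (mm m U (tv m A (smult c a))) (mm n (tv n B (smult c a)) U)) =
    mscal c (madd (\<delta> a) (msub (mm m U (tv m A a)) (mm n (tv n B a) U)))"
    using Der_smult[OF D] by (simp add: tev_smult mmul_mscal_left mmul_mscal_right Fq_pow)
      (simp add: mdefs fun_eq_iff algebra_simps smult_add_right smult_diff_right)
next
  fix a b assume a: "a \<in> AQ" and b: "b \<in> AQ"
  show "madd (\<delta> (a * b)) (msub (mm m U (tv m A (a * b))) (mm n (tv n B (a * b)) U)) =
    madd (mm n (tv n B a) (madd (\<delta> b) (msub (mm m U (tv m A b)) (mm n (tv n B b) U))))
     (mm m (madd (\<delta> a) (msub (mm m U (tv m A a)) (mm n (tv n B a) U))) (tv m A b))"
    using Der_mult[OF D a b] by (simp add: tev_mult[OF A b] tev_mult[OF B b] mmul_madd_left mmul_madd_right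
        mmul_msub_left mmul_msub_right mmul_assoc) (simp add: mdefs fun_eq_iff algebra_simps)
qed

end

context tw begin

abbreviation HM :: "nat \<Rightarrow> 'k tmatrix \<Rightarrow> nat \<Rightarrow> 'k tmatrix \<Rightarrow> ('k tmatrix, 'k poly) ssmod"
  where "HM \<equiv> Hom_mod q"
abbreviation EM :: "nat \<Rightarrow> 'k tmatrix \<Rightarrow> nat \<Rightarrow> 'k tmatrix \<Rightarrow> ('k poly \<Rightarrow> 'k tmatrix, 'k poly) ssmod"
  where "EM \<equiv> Ext_mod q"

lemma ext_eq_refl: "(\<And>a. a \<in> AQ \<Longrightarrow> x a = y a) \<Longrightarrow> ext_eq q m A n B x (y :: 'k poly \<Rightarrow> 'k tmatrix)"
  unfolding ext_eq_def by (rule exI[of _ mzero]) (simp add: msub_def)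

lemma smod_homI:
  assumes "\<And>x. x \<in> scar M \<Longrightarrow> f x \<in> scar N"
    and "\<And>x y. x \<in> scar M \<Longrightarrow> y \<in> scar M \<Longrightarrow> seqv M x y \<Longrightarrow> seqv N (f x) (f y)"
    and "\<And>x y. x \<in> scar M \<Longrightarrow> y \<in> scar M \<Longrightarrow> seqv N (f (sadd M x y)) (sadd N (f x) (f y))"
    and "\<And>a x. a \<in> R \<Longrightarrow> x \<in> scar M \<Longrightarrow> seqv N (f (sact M a x)) (sact N a (f x))"
  shows "smod_hom R M N f"
  unfolding smod_hom_def using assms by blast

lemma HM_simps: "scar (HM m A n B) = Hom_tau q m A n B" "seqv (HM m A n B) = (=)" "sadd (HM m A n B) = madd"
  "szero (HM m A n B) = mzero" "sact (HM m A n B) = (\<lambda>a f. mm n (tv n B a) f)"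
  unfolding Hom_mod_def by simp_all

lemma EM_simps: "scar (EM m A n B) = Dr m A n B" "seqv (EM m A n B) = ext_eq q m A n B"
  "sadd (EM m A n B) = (\<lambda>\<delta> \<delta>' a. madd (\<delta> a) (\<delta>' a))"
  "szero (EM m A n B) = (\<lambda>a. mzero)" "sact (EM m A n B) = (\<lambda>a \<delta> b. mm n (tv n B a) (\<delta> b))"
  unfolding Ext_mod_def by simp_all

lemma Hom_tau_iff: "f \<in> Hom_tau q m A n B \<longleftrightarrow> tmat n m f \<and> mm m f A = mm n B f"
  unfolding Hom_tau_def by simp

lemma hom_left:
  assumes k: "tmat p n k" "mm n k B = mm p C k"
  shows "smod_hom AQ (HM g G n B) (HM g G p C) (\<lambda>f. mm n k f)"
proof (rule smod_homI, unfold HM_simps Hom_tau_iff)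
  fix f assume f: "tmat n g f \<and> mm g f G = mm n B f"
  show "tmat p g (mm n k f) \<and> mm g (mm n k f) G = mm p C (mm n k f)"
  proof
    show "tmat p g (mm n k f)" using f k tmat_mmul by blast
    have "mm g (mm n k f) G = mm n k (mm n B f)" using f by (simp add: mmul_assoc)
    also have "\<dots> = mm p C (mm n k f)" using k by (simp add: mmul_assoc[symmetric])
    finally show "mm g (mm n k f) G = mm p C (mm n k f)" .
  qed
next
  fix f f' show "mm n k (madd f f') = madd (mm n k f) (mm n k f')" by (rule mmul_madd_right)
next
  fix a f assume a: "a \<in> AQ"
  show "mm n k (mm n (tv n B a) f) = mm p (tv p C a) (mm n k f)"
    by (simp add: mmul_assoc[symmetric] hom_tev[OF k a])
qed simp_all

lemma hom_right:
  assumes k: "tmat m m' k" "mm m' k A' = mm m A k"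
  shows "smod_hom AQ (HM m A g G) (HM m' A' g G) (\<lambda>h. mm m h k)"
proof (rule smod_homI, unfold HM_simps Hom_tau_iff)
  fix h assume h: "tmat g m h \<and> mm m h A = mm g G h"
  have "mm m' (mm m h k) A' = mm m (mm m h A) k" using k by (simp add: mmul_assoc)
  then show "tmat g m' (mm m h k) \<and> mm m' (mm m h k) A' = mm g G (mm m h k)"
    using h k tmat_mmul by (metis mmul_assoc)
next
  fix f f' show "mm m (madd f f') k = madd (mm m f k) (mm m f' k)" by (rule mmul_madd_left)
next
  fix a f show "mm m (mm g (tv g G a) f) k = mm g (tv g G a) (mm m f k)" by (rule mmul_assoc)
qed simp_all

lemma ext_left:
  assumes k: "tmat p n k" "mm n k B = mm p C k" and B: "tmat n n B" and C: "tmat p p C"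
  shows "smod_hom AQ (EM m A n B) (EM m A p C) (\<lambda>\<eta> a. mneg (mm n k (\<eta> a)))"
proof (rule smod_homI, unfold EM_simps)
  fix \<eta> assume "\<eta> \<in> Dr m A n B"
  then show "(\<lambda>a. mneg (mm n k (\<eta> a))) \<in> Dr m A p C" by (intro der_neg der_comp_left[OF _ k])
next
  fix \<eta> \<eta>' assume "ext_eq q m A n B \<eta> \<eta>'"
  then obtain U where U: "tmat n m U" "\<And>a. a \<in> AQ \<Longrightarrow> msub (\<eta> a) (\<eta>' a) = msub (mm m U (tv m A a)) (mm n (tv n B a) U)"
    unfolding ext_eq_def by blast
  show "ext_eq q m A p C (\<lambda>a. mneg (mm n k (\<eta> a))) (\<lambda>a. mneg (mm n k (\<eta>' a)))"
    unfolding ext_eq_def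
  proof (intro exI[of _ "mneg (mm n k U)"] conjI ballI)
    show "tmat p m (mneg (mm n k U))" using U k by (intro tmat_mneg) (rule tmat_mmul)
  next
    fix a assume a: "a \<in> AQ"
    have "msub (mneg (mm n k (\<eta> a))) (mneg (mm n k (\<eta>' a))) = mneg (mm n k (msub (\<eta> a) (\<eta>' a)))"
      by (simp add: mmul_msub_right) (simp add: mdefs fun_eq_iff)
    also have "\<dots> = mneg (mm n k (msub (mm m U (tv m A a)) (mm n (tv n B a) U)))" using U a by simp
    also have "\<dots> = msub (mm m (mneg (mm n k U)) (tv m A a)) (mm p (tv p C a) (mneg (mm n k U)))"
      by (simp add: mmul_msub_right mmul_mneg_left mmul_mneg_right mmul_assoc[symmetric] hom_tev[OF k a])
        (simp add: mmul_assoc mdefs fun_eq_iff)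
    finally show "msub (mneg (mm n k (\<eta> a))) (mneg (mm n k (\<eta>' a))) =
      msub (mm m (mneg (mm n k U)) (tv m A a)) (mm p (tv p C a) (mneg (mm n k U)))" .
  qed
next
  fix \<eta> \<eta>'
  show "ext_eq q m A p C (\<lambda>a. mneg (mm n k (madd (\<eta> a) (\<eta>' a))))
          (\<lambda>a. madd (mneg (mm n k (\<eta> a))) (mneg (mm n k (\<eta>' a))))"
    by (rule ext_eq_refl) (simp add: mmul_madd_right, simp add: mdefs fun_eq_iff)
next
  fix a \<eta> assume a: "a \<in> AQ"
  show "ext_eq q m A p C (\<lambda>b. mneg (mm n k (mm n (tv n B a) (\<eta> b))))
          (\<lambda>b. mm p (tv p C a) (mneg (mm n k (\<eta> b))))"
    by (rule ext_eq_refl) (simp add: mmul_assoc[symmetric] hom_tev[OF k a] mmul_mneg_right)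
qed

lemma ext_right:
  assumes k: "tmat m m' k" "mm m' k A' = mm m A k" and A: "tmat m m A" and A': "tmat m' m' A'"
  shows "smod_hom AQ (EM m A n B) (EM m' A' n B) (\<lambda>\<eta> a. mneg (mm m (\<eta> a) k))"
proof (rule smod_homI, unfold EM_simps)
  fix \<eta> assume "\<eta> \<in> Dr m A n B"
  then show "(\<lambda>a. mneg (mm m (\<eta> a) k)) \<in> Dr m' A' n B" by (intro der_neg der_comp_right[OF _ k])
next
  fix \<eta> \<eta>' assume "ext_eq q m A n B \<eta> \<eta>'"
  then obtain U where U: "tmat n m U" "\<And>a. a \<in> AQ \<Longrightarrow> msub (\<eta> a) (\<eta>' a) = msub (mm m U (tv m A a)) (mm n (tv n B a) U)"
    unfolding ext_eq_def by blast
  show "ext_eq q m' A' n B (\<lambda>a. mneg (mm m (\<eta> a) k)) (\<lambda>a. mneg (mm m (\<eta>' a) k))"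
    unfolding ext_eq_def
  proof (intro exI[of _ "mneg (mm m U k)"] conjI ballI)
    show "tmat n m' (mneg (mm m U k))" using U k by (intro tmat_mneg) (rule tmat_mmul)
  next
    fix a assume a: "a \<in> AQ"
    have "msub (mneg (mm m (\<eta> a) k)) (mneg (mm m (\<eta>' a) k)) = mneg (mm m (msub (\<eta> a) (\<eta>' a)) k)"
      by (simp add: mmul_msub_left) (simp add: mdefs fun_eq_iff)
    also have "\<dots> = mneg (mm m (msub (mm m U (tv m A a)) (mm n (tv n B a) U)) k)" using U a by simp
    also have "\<dots> = msub (mm m' (mneg (mm m U k)) (tv m' A' a)) (mm n (tv n B a) (mneg (mm m U k)))"
      by (simp add: mmul_msub_left mmul_mneg_left mmul_mneg_right mmul_assoc hom_tev[OF k a])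
        (simp add: mdefs fun_eq_iff)
    finally show "msub (mneg (mm m (\<eta> a) k)) (mneg (mm m (\<eta>' a) k)) =
      msub (mm m' (mneg (mm m U k)) (tv m' A' a)) (mm n (tv n B a) (mneg (mm m U k)))" .
  qed
next
  fix \<eta> \<eta>'
  show "ext_eq q m' A' n B (\<lambda>a. mneg (mm m (madd (\<eta> a) (\<eta>' a)) k))
          (\<lambda>a. madd (mneg (mm m (\<eta> a) k)) (mneg (mm m (\<eta>' a) k)))"
    by (rule ext_eq_refl) (simp add: mmul_madd_left, simp add: mdefs fun_eq_iff)
next
  fix a \<eta> assume a: "a \<in> AQ"
  show "ext_eq q m' A' n B (\<lambda>b. mneg (mm m (mm n (tv n B a) (\<eta> b)) k))
          (\<lambda>b. mm n (tv n B a) (mneg (mm m (\<eta> b) k)))"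
    by (rule ext_eq_refl) (simp add: mmul_assoc mmul_mneg_right)
qed

end

context tw begin

lemma tmatD1: "tmat m n M \<Longrightarrow> m \<le> i \<Longrightarrow> M i j = 0" unfolding tmat_def by blast
lemma tmatD2: "tmat m n M \<Longrightarrow> n \<le> j \<Longrightarrow> M i j = 0" unfolding tmat_def by blast
lemma tmat_mono: "tmat m n M \<Longrightarrow> m \<le> m' \<Longrightarrow> n \<le> n' \<Longrightarrow> tmat m' n' M" unfolding tmat_def by auto

lemma mm_entry: "mm n A B i j = (\<Sum>k<n. tm (A i k) (B k j))" unfolding mmul_def ..

lemma mm_cong: "(\<And>k. k < n \<Longrightarrow> A i k = A' i' k) \<Longrightarrow> (\<And>k. k < n \<Longrightarrow> B k j = B' k j') \<Longrightarrow>
  mm n A B i j = mm n A' B' i' j'"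
  unfolding mmul_def by (auto intro!: sum.cong)

lemma mm_zero_l: "(\<And>k. k < n \<Longrightarrow> A i k = 0) \<Longrightarrow> mm n A B i j = 0"
  unfolding mmul_def by (auto intro!: sum.neutral)

lemma mm_zero_r: "(\<And>k. k < n \<Longrightarrow> B k j = 0) \<Longrightarrow> mm n A B i j = 0"
  unfolding mmul_def by (auto intro!: sum.neutral)

lemma fun2_eqI: "(\<And>i j. f i j = h i j) \<Longrightarrow> f = (h :: nat \<Rightarrow> nat \<Rightarrow> 'k poly)" by (auto simp: fun_eq_iff)

lemma mzero_app[simp]: "mzero i j = 0" unfolding mzero_def ..
lemma madd_app[simp]: "madd A B i j = A i j + B i j" unfolding madd_def ..
lemma msub_app[simp]: "msub A B i j = A i j - B i j" unfolding msub_def ..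
lemma mneg_app[simp]: "mneg A i j = - A i j" unfolding mneg_def ..
lemma mscal_app[simp]: "mscal c A i j = smult c (A i j)" unfolding mscal_def ..

end

locale tctx = tw q ty for q :: nat and ty :: "'k::field itself" +
  fixes d e g :: nat and T S G :: "'k tmatrix" and \<delta> :: "'k poly \<Rightarrow> 'k tmatrix"
  assumes Tm: "tmat d d T" and Sm: "tmat e e S" and Gm: "tmat g g G" and dl: "\<delta> \<in> Der q d T e S"
begin

abbreviation X where "X \<equiv> ext_tmat d T \<delta> S"
abbreviation iM :: "'k tmatrix" where "iM \<equiv> incl_mat d e"
abbreviation pM :: "'k tmatrix" where "pM \<equiv> proj_mat d"

lemma dtt: "tmat e d (\<delta> tt)" by (rule Der_tmat[OF dl Aq_t])
lemma Xm: "tmat (d + e) (d + e) X" unfolding ext_tmat_def by (rule tmat_blk[OF Tm dtt Sm])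
lemma Xa: "a \<in> AQ \<Longrightarrow> tv (d + e) X a = blk d (tv d T a) (\<delta> a) (tv e S a)"
  by (rule ext_blk[OF dl Tm Sm])
lemma Xt: "tv (d + e) X tt = blk d T (\<delta> tt) S"
  using Xa[OF Aq_t] tev_t[OF Tm] tev_t[OF Sm] by simp
lemma Xdef: "X = blk d T (\<delta> tt) S" unfolding ext_tmat_def ..
lemma Gt: "tv g G tt = G" by (rule tev_t[OF Gm])
lemma Tt: "tv d T tt = T" by (rule tev_t[OF Tm])
lemma St: "tv e S tt = S" by (rule tev_t[OF Sm])
lemma Tam: "tmat d d (tv d T a)" by (rule tev_tmat[OF Tm])
lemma Sam: "tmat e e (tv e S a)" by (rule tev_tmat[OF Sm])
lemma Gam: "tmat g g (tv g G a)" by (rule tev_tmat[OF Gm])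
lemma dam: "a \<in> AQ \<Longrightarrow> tmat e d (\<delta> a)" by (rule Der_tmat[OF dl])

lemma iMm: "tmat (d + e) e iM" unfolding tmat_def incl_mat_def by auto
lemma pMm: "tmat d (d + e) pM" unfolding tmat_def proj_mat_def by auto
lemma pMm': "tmat (d + e) d pM" unfolding tmat_def proj_mat_def by auto

lemma i_hom: "mm e iM S = mm (d + e) X iM"
proof (rule fun2_eqI)
  fix r c
  show "mm e iM S r c = mm (d + e) X iM r c"
    unfolding E1 E2 Xdef using Sm by (auto simp: blk_def tmat_def)
qed

lemma p_hom: "mm (d + e) pM X = mm d T pM"
proof (rule fun2_eqI)
  fix r c
  show "mm (d + e) pM X r c = mm d T pM r c"
    unfolding E3 E4 Xdef using Tm by (auto simp: blk_def tmat_def)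
qed

lemma p_i: "mm (d + e) pM (mm e iM f) = mzero"
  by (rule fun2_eqI) (simp add: E1 E3)

lemma p_i': "mm (d + e) pM iM = mzero"
  by (rule fun2_eqI) (simp add: E2 E3 incl_mat_def)

end

lemma ab_lem: "(a::'a::ab_group_add) + b = c + dd \<Longrightarrow> dd - a = b - c"
  by (simp add: algebra_simps)

context tctx begin

lemma i3_hom: "smod_hom AQ (HM g G d T) (EM g G e S) (\<lambda>f a. mm d (\<delta> a) f)"
proof (rule smod_homI, unfold HM_simps EM_simps Hom_tau_iff)
  fix f assume f: "tmat d g f \<and> mm g f G = mm d T f"
  then show "(\<lambda>a. mm d (\<delta> a) f) \<in> Dr g G e S" using der_comp_right[OF dl] by blast
next
  fix f f' show "ext_eq q g G e S (\<lambda>a. mm d (\<delta> a) (madd f f')) (\<lambda>a. madd (mm d (\<delta> a) f) (mm d (\<delta> a) f'))"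
    by (rule ext_eq_refl) (simp add: mmul_madd_right)
next
  fix a f assume a: "a \<in> AQ" and f: "tmat d g f \<and> mm g f G = mm d T f"
  show "ext_eq q g G e S (\<lambda>b. mm d (\<delta> b) (mm d (tv d T a) f)) (\<lambda>b. mm e (tv e S a) (mm d (\<delta> b) f))"
    unfolding ext_eq_def
  proof (intro exI[of _ "mm d (\<delta> a) f"] conjI ballI)
    show "tmat e g (mm d (\<delta> a) f)" using tmat_mmul dam[OF a] f by blast
  next
    fix b assume b: "b \<in> AQ"
    have "\<delta> (a * b) = \<delta> (b * a)" by (simp add: mult.commute)
    then have EQ: "madd (mm e (tv e S a) (\<delta> b)) (mm d (\<delta> a) (tv d T b)) = madd (mm e (tv e S b) (\<delta> a)) (mm d (\<delta> b) (tv d T a))"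
      using Der_mult[OF dl a b] Der_mult[OF dl b a] by simp
    then have EQf: "mm d (madd (mm e (tv e S a) (\<delta> b)) (mm d (\<delta> a) (tv d T b))) f = mm d (madd (mm e (tv e S b) (\<delta> a)) (mm d (\<delta> b) (tv d T a))) f"
      by simp
    have hf: "mm g f (tv g G b) = mm d (tv d T b) f" using hom_tev[of d g f G T b] f b by simp
    show "msub (mm d (\<delta> b) (mm d (tv d T a) f)) (mm e (tv e S a) (mm d (\<delta> b) f)) =
          msub (mm g (mm d (\<delta> a) f) (tv g G b)) (mm e (tv e S b) (mm d (\<delta> a) f))"
    proof (rule fun2_eqI)
      fix i j
      from arg_cong[where f="\<lambda>M. M i j", OF EQf] have EQij: "mm e (tv e S a) (mm d (\<delta> b) f) i j + mm d (\<delta> a) (mm d (tv d T b) f) i j =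
                     mm e (tv e S b) (mm d (\<delta> a) f) i j + mm d (\<delta> b) (mm d (tv d T a) f) i j"
        by (simp add: mmul_madd_left mmul_assoc)
      then show "msub (mm d (\<delta> b) (mm d (tv d T a) f)) (mm e (tv e S a) (mm d (\<delta> b) f)) i j =
          msub (mm g (mm d (\<delta> a) f) (tv g G b)) (mm e (tv e S b) (mm d (\<delta> a) f)) i j"
        using ab_lem[OF EQij] by (simp add: mmul_assoc hf)
    qed
  qed
qed (simp_all add: ext_eq_refl)

lemma i1_hom: "smod_hom AQ (HM g G e S) (HM g G (d + e) X) (\<lambda>f. mm e iM f)"
  by (rule hom_left[OF iMm i_hom])
lemma i2_hom: "smod_hom AQ (HM g G (d + e) X) (HM g G d T) (\<lambda>h. mm (d + e) pM h)"
  by (rule hom_left[OF pMm p_hom])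
lemma i4_hom: "smod_hom AQ (EM g G e S) (EM g G (d + e) X) (\<lambda>\<eta> a. mneg (mm e iM (\<eta> a)))"
  by (rule ext_left[OF iMm i_hom Sm Xm])
lemma i5_hom: "smod_hom AQ (EM g G (d + e) X) (EM g G d T) (\<lambda>\<eta> a. mneg (mm (d + e) pM (\<eta> a)))"
  by (rule ext_left[OF pMm p_hom Xm Tm])

lemma i_inj: "exact_inj (HM g G e S) (HM g G (d + e) X) (\<lambda>f. mm e iM f)"
  unfolding exact_inj_def HM_simps
proof (intro ballI impI)
  fix f assume f: "f \<in> Hom_tau q g G e S" and z: "mm e iM f = mzero"
  show "f = mzero"
  proof (rule fun2_eqI)
    fix r j
    show "f r j = mzero r j"
    proof (cases "r < e")
      case True
      have "mm e iM f (d + r) j = 0" using z by simp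
      then show ?thesis using True by (simp add: E1)
    next
      case False then show ?thesis using f unfolding Hom_tau_iff tmat_def by auto
    qed
  qed
qed

lemma i_at2: "exact_at (HM g G e S) (HM g G (d + e) X) (HM g G d T) (\<lambda>f. mm e iM f) (\<lambda>h. mm (d + e) pM h)"
  unfolding exact_at_def HM_simps
proof (intro ballI iffI)
  fix h assume h: "h \<in> Hom_tau q g G (d + e) X" and z: "mm (d + e) pM h = mzero"
  have ht: "tmat (d + e) g h" and hh: "mm g h G = mm (d + e) X h" using h by (auto simp: Hom_tau_iff)
  have top: "h r j = 0" if "r < d" for r j
  proof -
    have "mm (d + e) pM h r j = 0" using z by simp
    then show ?thesis using that by (simp add: E3)
  qed
  define f where "f = (\<lambda>r j. if r < e then h (d + r) j else 0)"
  have ft: "tmat e g f" using ht unfolding f_def tmat_def by auto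
  have fh: "mm g f G = mm e S f"
  proof (rule fun2_eqI)
    fix r j
    show "mm g f G r j = mm e S f r j"
    proof (cases "r < e")
      case True
      have "mm g f G r j = mm g h G (d + r) j" by (rule mm_cong) (use True in \<open>auto simp: f_def\<close>)
      also have "\<dots> = mm d (\<delta> tt) h r j + mm e S (\<lambda>k j. h (d + k) j) r j"
        unfolding hh Xdef B1 by simp
      also have "mm d (\<delta> tt) h r j = 0" by (rule mm_zero_r) (simp add: top)
      also have "mm e S (\<lambda>k j. h (d + k) j) r j = mm e S f r j" by (rule mm_cong) (auto simp: f_def)
      finally show ?thesis by simp
    next
      case False
      have "mm g f G r j = 0" by (rule mm_zero_l) (use ft False in \<open>auto simp: tmat_def\<close>)
      moreover have "mm e S f r j = 0" by (rule mm_zero_l) (use Sm False in \<open>auto simp: tmat_def\<close>)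
      ultimately show ?thesis by simp
    qed
  qed
  have "mm e iM f = h"
  proof (rule fun2_eqI)
    fix r j show "mm e iM f r j = h r j"
      unfolding E1 using top tmatD1[OF ht] by (auto simp: f_def)
  qed
  then show "\<exists>f\<in>Hom_tau q g G e S. mm e iM f = h" using ft fh by (auto simp: Hom_tau_iff)
next
  fix h assume "\<exists>f\<in>Hom_tau q g G e S. mm e iM f = h"
  then obtain f where hf: "mm e iM f = h" by blast
  show "mm (d + e) pM h = mzero" unfolding hf[symmetric] by (rule p_i)
qed

end

context tctx begin

lemma Hom_tauD: "h \<in> Hom_tau q m A n B \<Longrightarrow> tmat n m h" "h \<in> Hom_tau q m A n B \<Longrightarrow> mm m h A = mm n B h"
  by (auto simp: Hom_tau_iff)

lemma i_at3: "exact_at (HM g G (d + e) X) (HM g G d T) (EM g G e S) (\<lambda>h. mm (d + e) pM h) (\<lambda>f a. mm d (\<delta> a) f)"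
  unfolding exact_at_def HM_simps EM_simps
proof (intro ballI iffI)
  fix f assume f: "f \<in> Hom_tau q g G d T" and z: "ext_eq q g G e S (\<lambda>a. mm d (\<delta> a) f) (\<lambda>a. mzero)"
  have ft: "tmat d g f" and fh: "mm g f G = mm d T f" using Hom_tauD[OF f] by auto
  obtain U where Um: "tmat e g U" and UU: "\<And>a. a \<in> AQ \<Longrightarrow> msub (mm d (\<delta> a) f) mzero = msub (mm g U (tv g G a)) (mm e (tv e S a) U)"
    using z unfolding ext_eq_def by blast
  have Ut: "msub (mm d (\<delta> tt) f) mzero = msub (mm g U G) (mm e S U)" using UU[OF Aq_t] by (simp add: Gt St)
  define h where "h = (\<lambda>r j. if r < d then f r j else U (r - d) j)"
  have ht: "tmat (d + e) g h" using ft Um unfolding h_def tmat_def by auto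
  have hh: "mm g h G = mm (d + e) X h"
  proof (rule fun2_eqI)
    fix r j
    show "mm g h G r j = mm (d + e) X h r j"
    proof (cases "r < d")
      case True
      have "mm g h G r j = mm g f G r j" by (rule mm_cong) (use True in \<open>auto simp: h_def\<close>)
      also have "\<dots> = mm d T f r j" using fh by simp
      also have "\<dots> = mm d T h r j" by (rule mm_cong) (auto simp: h_def)
      finally show ?thesis unfolding Xdef B1 using True by simp
    next
      case False
      have "mm g h G r j = mm g U G (r - d) j" by (rule mm_cong) (use False in \<open>auto simp: h_def\<close>)
      also have "\<dots> = mm d (\<delta> tt) f (r - d) j + mm e S U (r - d) j"
        using arg_cong[where f="\<lambda>M. M (r - d) j", OF Ut] by (simp add: algebra_simps)
      also have "mm d (\<delta> tt) f (r - d) j = mm d (\<delta> tt) h (r - d) j" by (rule mm_cong) (auto simp: h_def)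
      also have "mm e S U (r - d) j = mm e S (\<lambda>k j. h (d + k) j) (r - d) j" by (rule mm_cong) (auto simp: h_def)
      finally show ?thesis unfolding Xdef B1 using False by simp
    qed
  qed
  have "mm (d + e) pM h = f"
    by (rule fun2_eqI) (use ft in \<open>auto simp: E3 h_def tmat_def\<close>)
  then show "\<exists>h\<in>Hom_tau q g G (d + e) X. mm (d + e) pM h = f" using ht hh by (auto simp: Hom_tau_iff)
next
  fix f assume "\<exists>h\<in>Hom_tau q g G (d + e) X. mm (d + e) pM h = f"
  then obtain h where h: "h \<in> Hom_tau q g G (d + e) X" and hf: "mm (d + e) pM h = f" by blast
  have ht: "tmat (d + e) g h" and hh: "mm g h G = mm (d + e) X h" using Hom_tauD[OF h] by auto
  define V where "V = (\<lambda>r j. if r < e then h (d + r) j else 0)"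
  show "ext_eq q g G e S (\<lambda>a. mm d (\<delta> a) f) (\<lambda>a. mzero)"
    unfolding ext_eq_def
  proof (intro exI[of _ V] conjI ballI)
    show "tmat e g V" using ht unfolding V_def tmat_def by auto
  next
    fix a assume a: "a \<in> AQ"
    have hha: "mm g h (tv g G a) = mm (d + e) (blk d (tv d T a) (\<delta> a) (tv e S a)) h"
      using hom_tev[OF ht hh a] Xa[OF a] by simp
    show "msub (mm d (\<delta> a) f) mzero = msub (mm g V (tv g G a)) (mm e (tv e S a) V)"
    proof (rule fun2_eqI)
      fix r j
      show "msub (mm d (\<delta> a) f) mzero r j = msub (mm g V (tv g G a)) (mm e (tv e S a) V) r j"
      proof (cases "r < e")
        case True
        have "mm g V (tv g G a) r j = mm g h (tv g G a) (d + r) j" by (rule mm_cong) (use True in \<open>auto simp: V_def\<close>)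
        also have "\<dots> = mm d (\<delta> a) h r j + mm e (tv e S a) (\<lambda>k j. h (d + k) j) r j"
          unfolding hha B1 by simp
        also have "mm d (\<delta> a) h r j = mm d (\<delta> a) f r j" by (rule mm_cong) (auto simp: hf[symmetric] E3)
        also have "mm e (tv e S a) (\<lambda>k j. h (d + k) j) r j = mm e (tv e S a) V r j" by (rule mm_cong) (auto simp: V_def)
        finally show ?thesis by simp
      next
        case False
        have "mm d (\<delta> a) f r j = 0" by (rule mm_zero_l) (use dam[OF a] False in \<open>auto simp: tmat_def\<close>)
        moreover have "mm g V (tv g G a) r j = 0" by (rule mm_zero_l) (use False in \<open>auto simp: V_def\<close>)
        moreover have "mm e (tv e S a) V r j = 0" by (rule mm_zero_l) (use Sam False in \<open>auto simp: tmat_def\<close>)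
        ultimately show ?thesis by simp
      qed
    qed
  qed
qed

end

context tctx begin

lemma iM_entry: "d \<le> r \<Longrightarrow> tmat e g' M \<Longrightarrow> mm e iM M r j = M (r - d) j"
  unfolding E1 tmat_def by auto

lemma i_at4: "exact_at (HM g G d T) (EM g G e S) (EM g G (d + e) X) (\<lambda>f a. mm d (\<delta> a) f) (\<lambda>\<eta> a. mneg (mm e iM (\<eta> a)))"
  unfolding exact_at_def HM_simps EM_simps
proof (intro ballI iffI)
  fix \<eta> assume \<eta>: "\<eta> \<in> Dr g G e S" and z: "ext_eq q g G (d + e) X (\<lambda>a. mneg (mm e iM (\<eta> a))) (\<lambda>a. mzero)"
  obtain V where Vm: "tmat (d + e) g V" and VV: "\<And>a. a \<in> AQ \<Longrightarrow>
     msub (mneg (mm e iM (\<eta> a))) mzero = msub (mm g V (tv g G a)) (mm (d + e) (tv (d + e) X a) V)"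
    using z unfolding ext_eq_def by blast
  define f where "f = (\<lambda>r j. if r < d then V r j else 0)"
  define W where "W = (\<lambda>r j. if r < e then V (d + r) j else 0)"
  have ft: "tmat d g f" using Vm unfolding f_def tmat_def by auto
  have Wt: "tmat e g W" using Vm unfolding W_def tmat_def by auto
  have Vt: "msub (mneg (mm e iM (\<eta> tt))) mzero = msub (mm g V G) (mm (d + e) (blk d T (\<delta> tt) S) V)"
    using VV[OF Aq_t] by (simp add: Xt Gt)
  have fh: "mm g f G = mm d T f"
  proof (rule fun2_eqI)
    fix r j
    show "mm g f G r j = mm d T f r j"
    proof (cases "r < d")
      case True
      have "mm g f G r j = mm g V G r j" by (rule mm_cong) (use True in \<open>auto simp: f_def\<close>)
      moreover have "mm d T f r j = mm d T V r j" by (rule mm_cong) (auto simp: f_def)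
      moreover have "mm (d + e) (blk d T (\<delta> tt) S) V r j = mm d T V r j" unfolding B1 using True by simp
      moreover have "mm e iM (\<eta> tt) r j = 0" using True by (simp add: E1)
      ultimately show ?thesis using arg_cong[where f="\<lambda>M. M r j", OF Vt] by simp
    next
      case False
      have "mm g f G r j = 0" by (rule mm_zero_l) (use False in \<open>auto simp: f_def\<close>)
      moreover have "mm d T f r j = 0" by (rule mm_zero_l) (use Tm False in \<open>auto simp: tmat_def\<close>)
      ultimately show ?thesis by simp
    qed
  qed
  have "ext_eq q g G e S (\<lambda>a. mm d (\<delta> a) f) \<eta>"
    unfolding ext_eq_def
  proof (intro exI[of _ W] conjI ballI)
    show "tmat e g W" by (rule Wt)
  next
    fix a assume a: "a \<in> AQ"
    have Va: "msub (mneg (mm e iM (\<eta> a))) mzero = msub (mm g V (tv g G a)) (mm (d + e) (blk d (tv d T a) (\<delta> a) (tv e S a)) V)"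
      using VV[OF a] Xa[OF a] by simp
    show "msub (mm d (\<delta> a) f) (\<eta> a) = msub (mm g W (tv g G a)) (mm e (tv e S a) W)"
    proof (rule fun2_eqI)
      fix r j
      show "msub (mm d (\<delta> a) f) (\<eta> a) r j = msub (mm g W (tv g G a)) (mm e (tv e S a) W) r j"
      proof (cases "r < e")
        case True
        have 1: "mm g V (tv g G a) (d + r) j = mm g W (tv g G a) r j" by (rule mm_cong) (use True in \<open>auto simp: W_def\<close>)
        have 2: "mm (d + e) (blk d (tv d T a) (\<delta> a) (tv e S a)) V (d + r) j = mm d (\<delta> a) f r j + mm e (tv e S a) W r j"
          unfolding B1 by (simp, intro arg_cong2[where f="(+)"] mm_cong) (auto simp: f_def W_def)
        have 3: "mm e iM (\<eta> a) (d + r) j = \<eta> a r j" using iM_entry[OF _ Der_tmat[OF \<eta> a], of "d + r" j] by simp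
        show ?thesis using arg_cong[where f="\<lambda>M. M (d + r) j", OF Va] 1 2 3 by (simp add: algebra_simps)
      next
        case False
        have "mm d (\<delta> a) f r j = 0" by (rule mm_zero_l) (use dam[OF a] False in \<open>auto simp: tmat_def\<close>)
        moreover have "\<eta> a r j = 0" using Der_tmat[OF \<eta> a] False by (auto simp: tmat_def)
        moreover have "mm g W (tv g G a) r j = 0" by (rule mm_zero_l) (use Wt False in \<open>auto simp: tmat_def\<close>)
        moreover have "mm e (tv e S a) W r j = 0" by (rule mm_zero_l) (use Sam False in \<open>auto simp: tmat_def\<close>)
        ultimately show ?thesis by simp
      qed
    qed
  qed
  then show "\<exists>f\<in>Hom_tau q g G d T. ext_eq q g G e S (\<lambda>a. mm d (\<delta> a) f) \<eta>"
    using ft fh by (auto simp: Hom_tau_iff)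
next
  fix \<eta> assume \<eta>: "\<eta> \<in> Dr g G e S" and "\<exists>f\<in>Hom_tau q g G d T. ext_eq q g G e S (\<lambda>a. mm d (\<delta> a) f) \<eta>"
  then obtain f where f: "f \<in> Hom_tau q g G d T" and z: "ext_eq q g G e S (\<lambda>a. mm d (\<delta> a) f) \<eta>" by blast
  have ft: "tmat d g f" and fh: "mm g f G = mm d T f" using Hom_tauD[OF f] by auto
  obtain U where Um: "tmat e g U" and UU: "\<And>a. a \<in> AQ \<Longrightarrow>
      msub (mm d (\<delta> a) f) (\<eta> a) = msub (mm g U (tv g G a)) (mm e (tv e S a) U)"
    using z unfolding ext_eq_def by blast
  define V where "V = (\<lambda>r j. if r < d then f r j else U (r - d) j)"
  show "ext_eq q g G (d + e) X (\<lambda>a. mneg (mm e iM (\<eta> a))) (\<lambda>a. mzero)"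
    unfolding ext_eq_def
  proof (intro exI[of _ V] conjI ballI)
    show "tmat (d + e) g V" using ft Um unfolding V_def tmat_def by auto
  next
    fix a assume a: "a \<in> AQ"
    have fa: "mm g f (tv g G a) = mm d (tv d T a) f" by (rule hom_tev[OF ft fh a])
    show "msub (mneg (mm e iM (\<eta> a))) mzero = msub (mm g V (tv g G a)) (mm (d + e) (tv (d + e) X a) V)"
    proof (rule fun2_eqI)
      fix r j
      show "msub (mneg (mm e iM (\<eta> a))) mzero r j = msub (mm g V (tv g G a)) (mm (d + e) (tv (d + e) X a) V) r j"
      proof (cases "r < d")
        case True
        have "mm g V (tv g G a) r j = mm g f (tv g G a) r j" by (rule mm_cong) (use True in \<open>auto simp: V_def\<close>)
        moreover have "mm (d + e) (tv (d + e) X a) V r j = mm d (tv d T a) f r j"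
          unfolding Xa[OF a] B1 using True by (simp, intro mm_cong) (auto simp: V_def)
        ultimately show ?thesis using True fa by (simp add: E1)
      next
        case False
        have 1: "mm g V (tv g G a) r j = mm g U (tv g G a) (r - d) j" by (rule mm_cong) (use False in \<open>auto simp: V_def\<close>)
        have 2: "mm (d + e) (tv (d + e) X a) V r j = mm d (\<delta> a) f (r - d) j + mm e (tv e S a) U (r - d) j"
          unfolding Xa[OF a] B1 using False by (simp, intro arg_cong2[where f="(+)"] mm_cong) (auto simp: V_def)
        have 3: "mm e iM (\<eta> a) r j = \<eta> a (r - d) j" using iM_entry[OF _ Der_tmat[OF \<eta> a]] False by simp
        show ?thesis using arg_cong[where f="\<lambda>M. M (r - d) j", OF UU[OF a]] 1 2 3 by (simp add: algebra_simps)
      qed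
    qed
  qed
qed

end

context tctx begin

definition bot :: "'k tmatrix \<Rightarrow> 'k tmatrix" where
  "bot M = (\<lambda>r j. if r < e then M (d + r) j else 0)"

lemma der_bot:
  assumes \<xi>: "\<xi> \<in> Dr g G (d + e) X" and top: "\<And>a r j. a \<in> AQ \<Longrightarrow> r < d \<Longrightarrow> \<xi> a r j = 0"
  shows "(\<lambda>a. bot (\<xi> a)) \<in> Dr g G e S"
proof (rule DerI)
  fix a assume a: "a \<in> AQ"
  show "tmat e g (bot (\<xi> a))" using Der_tmat[OF \<xi> a] unfolding bot_def tmat_def by auto
next
  fix a b assume "a \<in> AQ" "b \<in> AQ"
  then show "bot (\<xi> (a + b)) = madd (bot (\<xi> a)) (bot (\<xi> b))"
    using Der_add[OF \<xi>] by (auto simp: bot_def fun_eq_iff)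
next
  fix c a assume "c \<in> FQ" "a \<in> AQ"
  then show "bot (\<xi> (smult c a)) = mscal c (bot (\<xi> a))"
    using Der_smult[OF \<xi>] by (auto simp: bot_def fun_eq_iff)
next
  fix a b assume a: "a \<in> AQ" and b: "b \<in> AQ"
  show "bot (\<xi> (a * b)) = madd (mm e (tv e S a) (bot (\<xi> b))) (mm g (bot (\<xi> a)) (tv g G b))"
  proof (rule fun2_eqI)
    fix r j
    show "bot (\<xi> (a * b)) r j = madd (mm e (tv e S a) (bot (\<xi> b))) (mm g (bot (\<xi> a)) (tv g G b)) r j"
    proof (cases "r < e")
      case True
      have "bot (\<xi> (a * b)) r j = mm (d + e) (blk d (tv d T a) (\<delta> a) (tv e S a)) (\<xi> b) (d + r) j + mm g (\<xi> a) (tv g G b) (d + r) j"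
        using True Der_mult[OF \<xi> a b] Xa[OF a] by (simp add: bot_def)
      also have "mm (d + e) (blk d (tv d T a) (\<delta> a) (tv e S a)) (\<xi> b) (d + r) j =
                 mm d (\<delta> a) (\<xi> b) r j + mm e (tv e S a) (\<lambda>k j. \<xi> b (d + k) j) r j"
        unfolding B1 by simp
      also have "mm d (\<delta> a) (\<xi> b) r j = 0" by (rule mm_zero_r) (simp add: top[OF b])
      also have "mm e (tv e S a) (\<lambda>k j. \<xi> b (d + k) j) r j = mm e (tv e S a) (bot (\<xi> b)) r j"
        by (rule mm_cong) (auto simp: bot_def)
      also have "mm g (\<xi> a) (tv g G b) (d + r) j = mm g (bot (\<xi> a)) (tv g G b) r j"
        by (rule mm_cong) (use True in \<open>auto simp: bot_def\<close>)
      finally show ?thesis by simp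
    next
      case False
      have "mm e (tv e S a) (bot (\<xi> b)) r j = 0" by (rule mm_zero_l) (use Sam False in \<open>auto simp: tmat_def\<close>)
      moreover have "mm g (bot (\<xi> a)) (tv g G b) r j = 0" by (rule mm_zero_l) (use False in \<open>auto simp: bot_def\<close>)
      ultimately show ?thesis using False by (simp add: bot_def)
    qed
  qed
qed

lemma i_at5: "exact_at (EM g G e S) (EM g G (d + e) X) (EM g G d T) (\<lambda>\<eta> a. mneg (mm e iM (\<eta> a))) (\<lambda>\<eta> a. mneg (mm (d + e) pM (\<eta> a)))"
  unfolding exact_at_def EM_simps
proof (intro ballI iffI)
  fix \<xi> assume \<xi>: "\<xi> \<in> Dr g G (d + e) X" and z: "ext_eq q g G d T (\<lambda>a. mneg (mm (d + e) pM (\<xi> a))) (\<lambda>a. mzero)"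
  obtain U where Um: "tmat d g U" and UU: "\<And>a. a \<in> AQ \<Longrightarrow>
     msub (mneg (mm (d + e) pM (\<xi> a))) mzero = msub (mm g U (tv g G a)) (mm d (tv d T a) U)"
    using z unfolding ext_eq_def by blast
  have Um': "tmat (d + e) g U" using tmat_mono[OF Um] by simp
  define \<xi>' where "\<xi>' = (\<lambda>a. madd (\<xi> a) (msub (mm g U (tv g G a)) (mm (d + e) (tv (d + e) X a) U)))"
  have \<xi>'D: "\<xi>' \<in> Dr g G (d + e) X" unfolding \<xi>'_def by (rule der_plus_inner[OF \<xi> Um' Gm Xm])
  have top: "\<xi>' a r j = 0" if a: "a \<in> AQ" and r: "r < d" for a r j
  proof -
    have "mm (d + e) (tv (d + e) X a) U r j = mm d (tv d T a) U r j"
      unfolding Xa[OF a] B1 using r by simp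
    then show ?thesis using arg_cong[where f="\<lambda>M. M r j", OF UU[OF a]] r
      by (simp add: \<xi>'_def E3 algebra_simps)
  qed
  define \<eta> where "\<eta> = (\<lambda>a. mneg (bot (\<xi>' a)))"
  have \<eta>D: "\<eta> \<in> Dr g G e S" unfolding \<eta>_def by (rule der_neg[OF der_bot[OF \<xi>'D top]])
  have "ext_eq q g G (d + e) X (\<lambda>a. mneg (mm e iM (\<eta> a))) \<xi>"
    unfolding ext_eq_def
  proof (intro exI[of _ U] conjI ballI)
    show "tmat (d + e) g U" by (rule Um')
  next
    fix a assume a: "a \<in> AQ"
    have "mneg (mm e iM (\<eta> a)) = \<xi>' a"
    proof (rule fun2_eqI)
      fix r j
      show "mneg (mm e iM (\<eta> a)) r j = \<xi>' a r j"
        using top[OF a, of r j] Der_tmat[OF \<xi>'D a]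
        unfolding \<eta>_def mmul_mneg_right by (auto simp: E1 bot_def tmat_def)
    qed
    then show "msub (mneg (mm e iM (\<eta> a))) (\<xi> a) = msub (mm g U (tv g G a)) (mm (d + e) (tv (d + e) X a) U)"
      by (simp add: \<xi>'_def fun_eq_iff)
  qed
  then show "\<exists>\<eta>\<in>Dr g G e S. ext_eq q g G (d + e) X (\<lambda>a. mneg (mm e iM (\<eta> a))) \<xi>" using \<eta>D by blast
next
  fix \<xi> assume \<xi>: "\<xi> \<in> Dr g G (d + e) X" and "\<exists>\<eta>\<in>Dr g G e S. ext_eq q g G (d + e) X (\<lambda>a. mneg (mm e iM (\<eta> a))) \<xi>"
  then obtain \<eta> W where Wm: "tmat (d + e) g W" and WW: "\<And>a. a \<in> AQ \<Longrightarrow>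
     msub (mneg (mm e iM (\<eta> a))) (\<xi> a) = msub (mm g W (tv g G a)) (mm (d + e) (tv (d + e) X a) W)"
    unfolding ext_eq_def by blast
  show "ext_eq q g G d T (\<lambda>a. mneg (mm (d + e) pM (\<xi> a))) (\<lambda>a. mzero)"
    unfolding ext_eq_def
  proof (intro exI[of _ "mm (d + e) pM W"] conjI ballI)
    show "tmat d g (mm (d + e) pM W)" using tmat_mmul[OF pMm Wm] .
  next
    fix a assume a: "a \<in> AQ"
    have pa: "mm (d + e) pM (tv (d + e) X a) = mm d (tv d T a) pM" by (rule hom_tev[OF pMm p_hom a])
    have "mm (d + e) pM (msub (mneg (mm e iM (\<eta> a))) (\<xi> a)) = mm (d + e) pM (msub (mm g W (tv g G a)) (mm (d + e) (tv (d + e) X a) W))"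
      using WW[OF a] by simp
    then have "msub mzero (mm (d + e) pM (\<xi> a)) = msub (mm g (mm (d + e) pM W) (tv g G a)) (mm d (tv d T a) (mm (d + e) pM W))"
      by (simp add: mmul_msub_right mmul_mneg_right p_i p_i' mmul_assoc[symmetric] pa)
        (simp add: mmul_assoc mzero_def mneg_def)
    then show "msub (mneg (mm (d + e) pM (\<xi> a))) mzero = msub (mm g (mm (d + e) pM W) (tv g G a)) (mm d (tv d T a) (mm (d + e) pM W))"
      by (simp add: fun_eq_iff)
  qed
qed

lemma i_surj: "exact_surj (EM g G (d + e) X) (EM g G d T) (\<lambda>\<eta> a. mneg (mm (d + e) pM (\<eta> a)))"
  unfolding exact_surj_def EM_simps
proof (intro ballI)
  fix \<eta> assume \<eta>: "\<eta> \<in> Dr g G d T"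
  have Dm: "tmat (d + e) g (mneg (\<eta> tt))" using tmat_mono[OF tmat_mneg[OF Der_tmat[OF \<eta> Aq_t]]] by simp
  obtain \<xi> where \<xi>: "\<xi> \<in> Dr g G (d + e) X" and \<xi>t: "\<xi> tt = mneg (\<eta> tt)" using Der_exists[OF Gm Dm Xm] by blast
  have \<zeta>: "(\<lambda>a. mneg (mm (d + e) pM (\<xi> a))) \<in> Dr g G d T" by (rule der_neg[OF der_comp_left[OF \<xi> pMm p_hom]])
  have "mneg (mm (d + e) pM (\<xi> tt)) = \<eta> tt"
    using Der_tmat[OF \<eta> Aq_t] unfolding \<xi>t by (intro fun2_eqI) (auto simp: E3 tmat_def)
  then have "\<And>a. a \<in> AQ \<Longrightarrow> mneg (mm (d + e) pM (\<xi> a)) = \<eta> a"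
    using Der_unique[OF \<zeta> \<eta>] by blast
  then have "ext_eq q g G d T (\<lambda>a. mneg (mm (d + e) pM (\<xi> a))) \<eta>" by (rule ext_eq_refl)
  then show "\<exists>\<xi>\<in>Dr g G (d + e) X. ext_eq q g G d T (\<lambda>a. mneg (mm (d + e) pM (\<xi> a))) \<eta>" using \<xi> by blast
qed

end

context tctx begin

lemma ii1_hom: "smod_hom AQ (HM d T g G) (HM (d + e) X g G) (\<lambda>h. mm d h pM)"
  by (rule hom_right[OF pMm p_hom])
lemma ii2_hom: "smod_hom AQ (HM (d + e) X g G) (HM e S g G) (\<lambda>h. mm (d + e) h iM)"
  by (rule hom_right[OF iMm i_hom])
lemma ii4_hom: "smod_hom AQ (EM d T g G) (EM (d + e) X g G) (\<lambda>\<eta> a. mneg (mm d (\<eta> a) pM))"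
  by (rule ext_right[OF pMm p_hom Tm Xm])
lemma ii5_hom: "smod_hom AQ (EM (d + e) X g G) (EM e S g G) (\<lambda>\<eta> a. mneg (mm (d + e) (\<eta> a) iM))"
  by (rule ext_right[OF iMm i_hom Xm Sm])

lemma ii3_hom: "smod_hom AQ (HM e S g G) (EM d T g G) (\<lambda>h a. mm e h (\<delta> a))"
proof (rule smod_homI, unfold HM_simps EM_simps Hom_tau_iff)
  fix h assume h: "tmat g e h \<and> mm e h S = mm g G h"
  then show "(\<lambda>a. mm e h (\<delta> a)) \<in> Dr d T g G" using der_comp_left[OF dl] by blast
next
  fix h h' show "ext_eq q d T g G (\<lambda>a. mm e (madd h h') (\<delta> a)) (\<lambda>a. madd (mm e h (\<delta> a)) (mm e h' (\<delta> a)))"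
    by (rule ext_eq_refl) (simp add: mmul_madd_left)
next
  fix a h show "ext_eq q d T g G (\<lambda>b. mm e (mm g (tv g G a) h) (\<delta> b)) (\<lambda>b. mm g (tv g G a) (mm e h (\<delta> b)))"
    by (rule ext_eq_refl) (simp add: mmul_assoc)
qed (simp_all add: ext_eq_refl)

lemma ii_inj: "exact_inj (HM d T g G) (HM (d + e) X g G) (\<lambda>h. mm d h pM)"
  unfolding exact_inj_def HM_simps
proof (intro ballI impI)
  fix h assume h: "h \<in> Hom_tau q d T g G" and z: "mm d h pM = mzero"
  show "h = mzero"
  proof (rule fun2_eqI)
    fix r c
    show "h r c = mzero r c"
    proof (cases "c < d")
      case True
      have "mm d h pM r c = 0" using z by simp
      then show ?thesis using True by (simp add: E4)
    next
      case False then show ?thesis using h unfolding Hom_tau_iff tmat_def by auto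
    qed
  qed
qed

lemma ii_at2: "exact_at (HM d T g G) (HM (d + e) X g G) (HM e S g G) (\<lambda>h. mm d h pM) (\<lambda>h. mm (d + e) h iM)"
  unfolding exact_at_def HM_simps
proof (intro ballI iffI)
  fix H assume H: "H \<in> Hom_tau q (d + e) X g G" and z: "mm (d + e) H iM = mzero"
  have Ht: "tmat g (d + e) H" and HH: "mm (d + e) H X = mm g G H" using Hom_tauD[OF H] by auto
  have R: "H r (d + k) = 0" if "k < e" for r k
  proof -
    have "mm (d + e) H iM r k = 0" using z by simp
    then show ?thesis using that by (simp add: E2)
  qed
  define h where "h = (\<lambda>r c. if c < d then H r c else 0)"
  have ht: "tmat g d h" using Ht unfolding h_def tmat_def by auto
  have hh: "mm d h T = mm g G h"
  proof (rule fun2_eqI)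
    fix r c
    show "mm d h T r c = mm g G h r c"
    proof (cases "c < d")
      case True
      have "mm d h T r c = mm d H T r c" by (rule mm_cong) (auto simp: h_def)
      also have "\<dots> = mm (d + e) H X r c"
        unfolding Xdef B2 using True by (simp add: mm_zero_l R)
      also have "\<dots> = mm g G H r c" using HH by simp
      also have "\<dots> = mm g G h r c" by (rule mm_cong) (use True in \<open>auto simp: h_def\<close>)
      finally show ?thesis .
    next
      case False
      have "mm d h T r c = 0" by (rule mm_zero_r) (use Tm False in \<open>auto simp: tmat_def\<close>)
      moreover have "mm g G h r c = 0" by (rule mm_zero_r) (use False in \<open>auto simp: h_def\<close>)
      ultimately show ?thesis by simp
    qed
  qed
  have "mm d h pM = H"
  proof (rule fun2_eqI)
    fix r c
    show "mm d h pM r c = H r c"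
    proof (cases "c < d")
      case True then show ?thesis by (simp add: E4 h_def)
    next
      case False
      show ?thesis
      proof (cases "c < d + e")
        case True
        then have "H r c = H r (d + (c - d))" using False by simp
        then show ?thesis using R[of "c - d" r] True False by (simp add: E4)
      next
        case False then show ?thesis using Ht by (auto simp: E4 tmat_def)
      qed
    qed
  qed
  then show "\<exists>h\<in>Hom_tau q d T g G. mm d h pM = H" using ht hh by (auto simp: Hom_tau_iff)
next
  fix H assume "\<exists>h\<in>Hom_tau q d T g G. mm d h pM = H"
  then obtain h where hH: "mm d h pM = H" by blast
  show "mm (d + e) H iM = mzero" unfolding hH[symmetric] by (rule fun2_eqI) (simp add: E2 E4)
qed

lemma ii_at3: "exact_at (HM (d + e) X g G) (HM e S g G) (EM d T g G) (\<lambda>h. mm (d + e) h iM) (\<lambda>h a. mm e h (\<delta> a))"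
  unfolding exact_at_def HM_simps EM_simps
proof (intro ballI iffI)
  fix h assume h: "h \<in> Hom_tau q e S g G" and z: "ext_eq q d T g G (\<lambda>a. mm e h (\<delta> a)) (\<lambda>a. mzero)"
  have ht: "tmat g e h" and hh: "mm e h S = mm g G h" using Hom_tauD[OF h] by auto
  obtain U where Um: "tmat g d U" and UU: "\<And>a. a \<in> AQ \<Longrightarrow> msub (mm e h (\<delta> a)) mzero = msub (mm d U (tv d T a)) (mm g (tv g G a) U)"
    using z unfolding ext_eq_def by blast
  have Ut: "msub (mm e h (\<delta> tt)) mzero = msub (mm d U T) (mm g G U)" using UU[OF Aq_t] by (simp add: Tt Gt)
  define H where "H = (\<lambda>r c. if c < d then - U r c else h r (c - d))"
  have Ht: "tmat g (d + e) H" using ht Um unfolding H_def tmat_def by auto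
  have HH: "mm (d + e) H X = mm g G H"
  proof (rule fun2_eqI)
    fix r c
    show "mm (d + e) H X r c = mm g G H r c"
    proof (cases "c < d")
      case True
      have 1: "mm d H T r c = - mm d U T r c"
        using mm_cong[of d H r "mneg U" r T c T c] mmul_mneg_left[of d U T] by (simp add: H_def)
      have 2: "mm e (\<lambda>r k. H r (d + k)) (\<delta> tt) r c = mm e h (\<delta> tt) r c" by (rule mm_cong) (auto simp: H_def)
      have 3: "mm g G H r c = - mm g G U r c"
        using mm_cong[of g G r G r H c "mneg U" c] mmul_mneg_right[of g G U] True by (simp add: H_def)
      show ?thesis unfolding Xdef B2 using True 1 2 3 arg_cong[where f="\<lambda>M. M r c", OF Ut] by simp
    next
      case False
      have 1: "mm e (\<lambda>r k. H r (d + k)) S r (c - d) = mm e h S r (c - d)" by (rule mm_cong) (auto simp: H_def)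
      have 2: "mm g G H r c = mm g G h r (c - d)" by (rule mm_cong) (use False in \<open>auto simp: H_def\<close>)
      show ?thesis unfolding Xdef B2 using False 1 2 hh by simp
    qed
  qed
  have "mm (d + e) H iM = h"
    by (rule fun2_eqI) (use ht in \<open>auto simp: E2 H_def tmat_def\<close>)
  then show "\<exists>H\<in>Hom_tau q (d + e) X g G. mm (d + e) H iM = h" using Ht HH by (auto simp: Hom_tau_iff)
next
  fix h assume "\<exists>H\<in>Hom_tau q (d + e) X g G. mm (d + e) H iM = h"
  then obtain H where H: "H \<in> Hom_tau q (d + e) X g G" and hH: "mm (d + e) H iM = h" by blast
  have Ht: "tmat g (d + e) H" and HH: "mm (d + e) H X = mm g G H" using Hom_tauD[OF H] by auto
  define HL where "HL = (\<lambda>r c. if c < d then H r c else 0)"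
  show "ext_eq q d T g G (\<lambda>a. mm e h (\<delta> a)) (\<lambda>a. mzero)"
    unfolding ext_eq_def
  proof (intro exI[of _ "mneg HL"] conjI ballI)
    show "tmat g d (mneg HL)" using Ht unfolding HL_def tmat_def by auto
  next
    fix a assume a: "a \<in> AQ"
    have HHa: "mm (d + e) H (blk d (tv d T a) (\<delta> a) (tv e S a)) = mm g (tv g G a) H"
      using hom_tev[OF Ht HH a] Xa[OF a] by simp
    show "msub (mm e h (\<delta> a)) mzero = msub (mm d (mneg HL) (tv d T a)) (mm g (tv g G a) (mneg HL))"
    proof (rule fun2_eqI)
      fix r c
      show "msub (mm e h (\<delta> a)) mzero r c = msub (mm d (mneg HL) (tv d T a)) (mm g (tv g G a) (mneg HL)) r c"
      proof (cases "c < d")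
        case True
        have 1: "mm e h (\<delta> a) r c = mm e (\<lambda>r k. H r (d + k)) (\<delta> a) r c"
          by (rule mm_cong) (auto simp: hH[symmetric] E2)
        have 2: "mm d HL (tv d T a) r c = mm d H (tv d T a) r c" by (rule mm_cong) (auto simp: HL_def)
        have 3: "mm g (tv g G a) HL r c = mm g (tv g G a) H r c" by (rule mm_cong) (use True in \<open>auto simp: HL_def\<close>)
        show ?thesis using arg_cong[where f="\<lambda>M. M r c", OF HHa] True 1 2 3
          by (simp add: B2 mmul_mneg_left mmul_mneg_right algebra_simps)
      next
        case False
        have "mm e h (\<delta> a) r c = 0" by (rule mm_zero_r) (use dam[OF a] False in \<open>auto simp: tmat_def\<close>)
        moreover have "mm d (mneg HL) (tv d T a) r c = 0" by (rule mm_zero_r) (use Tam False in \<open>auto simp: tmat_def\<close>)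
        moreover have "mm g (tv g G a) (mneg HL) r c = 0" by (rule mm_zero_r) (use False in \<open>auto simp: HL_def\<close>)
        ultimately show ?thesis by simp
      qed
    qed
  qed
qed

end

context tctx begin

lemma ii_at4: "exact_at (HM e S g G) (EM d T g G) (EM (d + e) X g G) (\<lambda>h a. mm e h (\<delta> a)) (\<lambda>\<eta> a. mneg (mm d (\<eta> a) pM))"
  unfolding exact_at_def HM_simps EM_simps
proof (intro ballI iffI)
  fix \<eta> assume \<eta>: "\<eta> \<in> Dr d T g G" and z: "ext_eq q (d + e) X g G (\<lambda>a. mneg (mm d (\<eta> a) pM)) (\<lambda>a. mzero)"
  obtain V where Vm: "tmat g (d + e) V" and VV: "\<And>a. a \<in> AQ \<Longrightarrow>
     msub (mneg (mm d (\<eta> a) pM)) mzero = msub (mm (d + e) V (tv (d + e) X a)) (mm g (tv g G a) V)"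
    using z unfolding ext_eq_def by blast
  define VR where "VR = (\<lambda>r k. if k < e then V r (d + k) else 0)"
  define VL where "VL = (\<lambda>r c. if c < d then V r c else 0)"
  have VRm: "tmat g e VR" using Vm unfolding VR_def tmat_def by auto
  have VLm: "tmat g d VL" using Vm unfolding VL_def tmat_def by auto
  have Vt: "msub (mneg (mm d (\<eta> tt) pM)) mzero = msub (mm (d + e) V (blk d T (\<delta> tt) S)) (mm g G V)"
    using VV[OF Aq_t] by (simp add: Xt Gt)
  have VRh: "mm e VR S = mm g G VR"
  proof (rule fun2_eqI)
    fix r k
    show "mm e VR S r k = mm g G VR r k"
    proof (cases "k < e")
      case True
      have 1: "mm e (\<lambda>r k. V r (d + k)) S r k = mm e VR S r k" by (rule mm_cong) (auto simp: VR_def)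
      have 2: "mm g G V r (d + k) = mm g G VR r k" by (rule mm_cong) (use True in \<open>auto simp: VR_def\<close>)
      show ?thesis using arg_cong[where f="\<lambda>M. M r (d + k)", OF Vt] 1 2 by (simp add: B2 E4)
    next
      case False
      have "mm e VR S r k = 0" by (rule mm_zero_r) (use Sm False in \<open>auto simp: tmat_def\<close>)
      moreover have "mm g G VR r k = 0" by (rule mm_zero_r) (use False in \<open>auto simp: VR_def\<close>)
      ultimately show ?thesis by simp
    qed
  qed
  have hH: "mneg VR \<in> Hom_tau q e S g G"
    using VRm VRh by (simp add: Hom_tau_iff tmat_mneg mmul_mneg_left mmul_mneg_right)
  have "ext_eq q d T g G (\<lambda>a. mm e (mneg VR) (\<delta> a)) \<eta>"
    unfolding ext_eq_def
  proof (intro exI[of _ VL] conjI ballI)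
    show "tmat g d VL" by (rule VLm)
  next
    fix a assume a: "a \<in> AQ"
    have Va: "msub (mneg (mm d (\<eta> a) pM)) mzero = msub (mm (d + e) V (blk d (tv d T a) (\<delta> a) (tv e S a))) (mm g (tv g G a) V)"
      using VV[OF a] Xa[OF a] by simp
    show "msub (mm e (mneg VR) (\<delta> a)) (\<eta> a) = msub (mm d VL (tv d T a)) (mm g (tv g G a) VL)"
    proof (rule fun2_eqI)
      fix r c
      show "msub (mm e (mneg VR) (\<delta> a)) (\<eta> a) r c = msub (mm d VL (tv d T a)) (mm g (tv g G a) VL) r c"
      proof (cases "c < d")
        case True
        have 1: "mm d V (tv d T a) r c = mm d VL (tv d T a) r c" by (rule mm_cong) (auto simp: VL_def)
        have 2: "mm e (\<lambda>r k. V r (d + k)) (\<delta> a) r c = mm e VR (\<delta> a) r c" by (rule mm_cong) (auto simp: VR_def)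
        have 3: "mm g (tv g G a) V r c = mm g (tv g G a) VL r c" by (rule mm_cong) (use True in \<open>auto simp: VL_def\<close>)
        show ?thesis using arg_cong[where f="\<lambda>M. M r c", OF Va] True 1 2 3
          by (simp add: B2 E4 mmul_mneg_left algebra_simps)
      next
        case False
        have "mm e (mneg VR) (\<delta> a) r c = 0" by (rule mm_zero_r) (use dam[OF a] False in \<open>auto simp: tmat_def\<close>)
        moreover have "\<eta> a r c = 0" using Der_tmat[OF \<eta> a] False by (auto simp: tmat_def)
        moreover have "mm d VL (tv d T a) r c = 0" by (rule mm_zero_r) (use Tam False in \<open>auto simp: tmat_def\<close>)
        moreover have "mm g (tv g G a) VL r c = 0" by (rule mm_zero_r) (use False in \<open>auto simp: VL_def\<close>)
        ultimately show ?thesis by simp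
      qed
    qed
  qed
  then show "\<exists>h\<in>Hom_tau q e S g G. ext_eq q d T g G (\<lambda>a. mm e h (\<delta> a)) \<eta>" using hH by blast
next
  fix \<eta> assume \<eta>: "\<eta> \<in> Dr d T g G" and "\<exists>h\<in>Hom_tau q e S g G. ext_eq q d T g G (\<lambda>a. mm e h (\<delta> a)) \<eta>"
  then obtain h where h: "h \<in> Hom_tau q e S g G" and z: "ext_eq q d T g G (\<lambda>a. mm e h (\<delta> a)) \<eta>" by blast
  have ht: "tmat g e h" and hh: "mm e h S = mm g G h" using Hom_tauD[OF h] by auto
  obtain U where Um: "tmat g d U" and UU: "\<And>a. a \<in> AQ \<Longrightarrow>
      msub (mm e h (\<delta> a)) (\<eta> a) = msub (mm d U (tv d T a)) (mm g (tv g G a) U)"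
    using z unfolding ext_eq_def by blast
  define V where "V = (\<lambda>r c. if c < d then U r c else - h r (c - d))"
  show "ext_eq q (d + e) X g G (\<lambda>a. mneg (mm d (\<eta> a) pM)) (\<lambda>a. mzero)"
    unfolding ext_eq_def
  proof (intro exI[of _ V] conjI ballI)
    show "tmat g (d + e) V" using ht Um unfolding V_def tmat_def by auto
  next
    fix a assume a: "a \<in> AQ"
    have ha: "mm e h (tv e S a) = mm g (tv g G a) h" by (rule hom_tev[OF ht hh a])
    show "msub (mneg (mm d (\<eta> a) pM)) mzero = msub (mm (d + e) V (tv (d + e) X a)) (mm g (tv g G a) V)"
    proof (rule fun2_eqI)
      fix r c
      show "msub (mneg (mm d (\<eta> a) pM)) mzero r c = msub (mm (d + e) V (tv (d + e) X a)) (mm g (tv g G a) V) r c"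
      proof (cases "c < d")
        case True
        have 1: "mm d V (tv d T a) r c = mm d U (tv d T a) r c" by (rule mm_cong) (auto simp: V_def)
        have 2: "mm e (\<lambda>r k. V r (d + k)) (\<delta> a) r c = - mm e h (\<delta> a) r c"
          using mm_cong[of e "\<lambda>r k. V r (d + k)" r "mneg h" r "\<delta> a" c "\<delta> a" c] mmul_mneg_left[of e h "\<delta> a"]
          by (simp add: V_def)
        have 3: "mm g (tv g G a) V r c = mm g (tv g G a) U r c" by (rule mm_cong) (use True in \<open>auto simp: V_def\<close>)
        show ?thesis using arg_cong[where f="\<lambda>M. M r c", OF UU[OF a]] True 1 2 3
          by (simp add: Xa[OF a] B2 E4 algebra_simps)
      next
        case False
        have 1: "mm e (\<lambda>r k. V r (d + k)) (tv e S a) r (c - d) = - mm e h (tv e S a) r (c - d)"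
          using mm_cong[of e "\<lambda>r k. V r (d + k)" r "mneg h" r "tv e S a" "c - d" "tv e S a" "c - d"] mmul_mneg_left[of e h "tv e S a"]
          by (simp add: V_def)
        have 2: "mm g (tv g G a) V r c = - mm g (tv g G a) h r (c - d)"
          using mm_cong[of g "tv g G a" r "tv g G a" r V c "mneg h" "c - d"] mmul_mneg_right[of g "tv g G a" h] False
          by (simp add: V_def)
        show ?thesis using False 1 2 ha by (simp add: Xa[OF a] B2 E4)
      qed
    qed
  qed
qed

end

context tctx begin

lemma der_left:
  assumes \<xi>: "\<xi> \<in> Dr (d + e) X g G" and rz: "\<And>a r c. a \<in> AQ \<Longrightarrow> d \<le> c \<Longrightarrow> \<xi> a r c = 0"
  shows "\<xi> \<in> Dr d T g G"
proof (rule DerI)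
  fix a assume a: "a \<in> AQ"
  show "tmat g d (\<xi> a)" using Der_tmat[OF \<xi> a] rz[OF a] unfolding tmat_def by auto
next
  fix a b assume "a \<in> AQ" "b \<in> AQ" then show "\<xi> (a + b) = madd (\<xi> a) (\<xi> b)" using Der_add[OF \<xi>] by blast
next
  fix c a assume "c \<in> FQ" "a \<in> AQ" then show "\<xi> (smult c a) = mscal c (\<xi> a)" using Der_smult[OF \<xi>] by blast
next
  fix a b assume a: "a \<in> AQ" and b: "b \<in> AQ"
  have "mm (d + e) (\<xi> a) (tv (d + e) X b) = mm d (\<xi> a) (tv d T b)"
  proof (rule fun2_eqI)
    fix r c
    show "mm (d + e) (\<xi> a) (tv (d + e) X b) r c = mm d (\<xi> a) (tv d T b) r c"
    proof (cases "c < d")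
      case True
      have "mm e (\<lambda>r k. \<xi> a r (d + k)) (\<delta> b) r c = 0" by (rule mm_zero_l) (simp add: rz[OF a])
      then show ?thesis using True by (simp add: Xa[OF b] B2)
    next
      case False
      have "mm e (\<lambda>r k. \<xi> a r (d + k)) (tv e S b) r (c - d) = 0" by (rule mm_zero_l) (simp add: rz[OF a])
      moreover have "mm d (\<xi> a) (tv d T b) r c = 0" by (rule mm_zero_r) (use Tam False in \<open>auto simp: tmat_def\<close>)
      ultimately show ?thesis using False by (simp add: Xa[OF b] B2)
    qed
  qed
  then show "\<xi> (a * b) = madd (mm g (tv g G a) (\<xi> b)) (mm d (\<xi> a) (tv d T b))"
    using Der_mult[OF \<xi> a b] by simp
qed

lemma ii_at5: "exact_at (EM d T g G) (EM (d + e) X g G) (EM e S g G) (\<lambda>\<eta> a. mneg (mm d (\<eta> a) pM)) (\<lambda>\<eta> a. mneg (mm (d + e) (\<eta> a) iM))"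
  unfolding exact_at_def EM_simps
proof (intro ballI iffI)
  fix \<xi> assume \<xi>: "\<xi> \<in> Dr (d + e) X g G" and z: "ext_eq q e S g G (\<lambda>a. mneg (mm (d + e) (\<xi> a) iM)) (\<lambda>a. mzero)"
  obtain U where Um: "tmat g e U" and UU: "\<And>a. a \<in> AQ \<Longrightarrow>
     msub (mneg (mm (d + e) (\<xi> a) iM)) mzero = msub (mm e U (tv e S a)) (mm g (tv g G a) U)"
    using z unfolding ext_eq_def by blast
  define W where "W = (\<lambda>r c. if d \<le> c then U r (c - d) else 0)"
  have Wm: "tmat g (d + e) W" using Um unfolding W_def tmat_def by auto
  define \<xi>' where "\<xi>' = (\<lambda>a. madd (\<xi> a) (msub (mm (d + e) W (tv (d + e) X a)) (mm g (tv g G a) W)))"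
  have \<xi>'D: "\<xi>' \<in> Dr (d + e) X g G" unfolding \<xi>'_def by (rule der_plus_inner[OF \<xi> Wm Xm Gm])
  have rz: "\<xi>' a r c = 0" if a: "a \<in> AQ" and c: "d \<le> c" for a r c
  proof -
    have 1: "mm (d + e) W (tv (d + e) X a) r c = mm e U (tv e S a) r (c - d)"
      unfolding Xa[OF a] B2 using c by (simp, intro mm_cong) (auto simp: W_def)
    have 2: "mm g (tv g G a) W r c = mm g (tv g G a) U r (c - d)"
      by (rule mm_cong) (use c in \<open>auto simp: W_def\<close>)
    have 3: "mm (d + e) (\<xi> a) iM r (c - d) = \<xi> a r c"
      using Der_tmat[OF \<xi> a] c unfolding E2 tmat_def by auto
    show ?thesis using arg_cong[where f="\<lambda>M. M r (c - d)", OF UU[OF a]] 1 2 3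
      by (simp add: \<xi>'_def algebra_simps)
  qed
  define \<eta> where "\<eta> = (\<lambda>a. mneg (\<xi>' a))"
  have \<eta>D: "\<eta> \<in> Dr d T g G" unfolding \<eta>_def by (rule der_neg[OF der_left[OF \<xi>'D rz]])
  have "ext_eq q (d + e) X g G (\<lambda>a. mneg (mm d (\<eta> a) pM)) \<xi>"
    unfolding ext_eq_def
  proof (intro exI[of _ W] conjI ballI)
    show "tmat g (d + e) W" by (rule Wm)
  next
    fix a assume a: "a \<in> AQ"
    have "mneg (mm d (\<eta> a) pM) = \<xi>' a"
    proof (rule fun2_eqI)
      fix r c
      show "mneg (mm d (\<eta> a) pM) r c = \<xi>' a r c"
        using rz[OF a, of c r] unfolding \<eta>_def mmul_mneg_left by (auto simp: E4)
    qed
    then show "msub (mneg (mm d (\<eta> a) pM)) (\<xi> a) = msub (mm (d + e) W (tv (d + e) X a)) (mm g (tv g G a) W)"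
      by (simp add: \<xi>'_def fun_eq_iff)
  qed
  then show "\<exists>\<eta>\<in>Dr d T g G. ext_eq q (d + e) X g G (\<lambda>a. mneg (mm d (\<eta> a) pM)) \<xi>" using \<eta>D by blast
next
  fix \<xi> assume \<xi>: "\<xi> \<in> Dr (d + e) X g G" and "\<exists>\<eta>\<in>Dr d T g G. ext_eq q (d + e) X g G (\<lambda>a. mneg (mm d (\<eta> a) pM)) \<xi>"
  then obtain \<eta> W where Wm: "tmat g (d + e) W" and WW: "\<And>a. a \<in> AQ \<Longrightarrow>
     msub (mneg (mm d (\<eta> a) pM)) (\<xi> a) = msub (mm (d + e) W (tv (d + e) X a)) (mm g (tv g G a) W)"
    unfolding ext_eq_def by blast
  show "ext_eq q e S g G (\<lambda>a. mneg (mm (d + e) (\<xi> a) iM)) (\<lambda>a. mzero)"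
    unfolding ext_eq_def
  proof (intro exI[of _ "mm (d + e) W iM"] conjI ballI)
    show "tmat g e (mm (d + e) W iM)" using tmat_mmul[OF Wm iMm] .
  next
    fix a assume a: "a \<in> AQ"
    have ia: "mm e iM (tv e S a) = mm (d + e) (tv (d + e) X a) iM" by (rule hom_tev[OF iMm i_hom a])
    have "mm (d + e) (msub (mneg (mm d (\<eta> a) pM)) (\<xi> a)) iM = mm (d + e) (msub (mm (d + e) W (tv (d + e) X a)) (mm g (tv g G a) W)) iM"
      using WW[OF a] by simp
    then have "msub mzero (mm (d + e) (\<xi> a) iM) = msub (mm e (mm (d + e) W iM) (tv e S a)) (mm g (tv g G a) (mm (d + e) W iM))"
      by (simp add: mmul_msub_left mmul_mneg_left mmul_assoc p_i' ia[symmetric])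
        (simp add: mmul_assoc[symmetric] mzero_def mneg_def)
    then show "msub (mneg (mm (d + e) (\<xi> a) iM)) mzero = msub (mm e (mm (d + e) W iM) (tv e S a)) (mm g (tv g G a) (mm (d + e) W iM))"
      by (simp add: fun_eq_iff)
  qed
qed

lemma ii_surj: "exact_surj (EM (d + e) X g G) (EM e S g G) (\<lambda>\<eta> a. mneg (mm (d + e) (\<eta> a) iM))"
  unfolding exact_surj_def EM_simps
proof (intro ballI)
  fix \<eta> assume \<eta>: "\<eta> \<in> Dr e S g G"
  define D where "D = (\<lambda>r c. if d \<le> c then - \<eta> tt r (c - d) else 0)"
  have Dm: "tmat g (d + e) D" using Der_tmat[OF \<eta> Aq_t] unfolding D_def tmat_def by auto
  obtain \<xi> where \<xi>: "\<xi> \<in> Dr (d + e) X g G" and \<xi>t: "\<xi> tt = D" using Der_exists[OF Xm Dm Gm] by blast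
  have \<zeta>: "(\<lambda>a. mneg (mm (d + e) (\<xi> a) iM)) \<in> Dr e S g G" by (rule der_neg[OF der_comp_right[OF \<xi> iMm i_hom]])
  have "mneg (mm (d + e) (\<xi> tt) iM) = \<eta> tt"
    using Der_tmat[OF \<eta> Aq_t] unfolding \<xi>t by (intro fun2_eqI) (auto simp: E2 D_def tmat_def)
  then have "\<And>a. a \<in> AQ \<Longrightarrow> mneg (mm (d + e) (\<xi> a) iM) = \<eta> a"
    using Der_unique[OF \<zeta> \<eta>] by blast
  then have "ext_eq q e S g G (\<lambda>a. mneg (mm (d + e) (\<xi> a) iM)) \<eta>" by (rule ext_eq_refl)
  then show "\<exists>\<xi>\<in>Dr (d + e) X g G. ext_eq q e S g G (\<lambda>a. mneg (mm (d + e) (\<xi> a) iM)) \<eta>" using \<xi> by blast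
qed

end

theorem theorem10p4:
  fixes p q n :: nat and \<theta> :: "'k::field"
    and d e g :: nat and T S TG :: "'k tmatrix" and \<delta> :: "'k poly \<Rightarrow> 'k tmatrix"
  assumes "prime p" and "CHAR('k) = p" and "n \<ge> 1" and "q = p ^ n"
    and "card (Fq q :: 'k set) = q"
    and "is_tmodule q \<theta> d T" and "is_tmodule q \<theta> e S" and "is_tmodule q \<theta> g TG"
    and "\<delta> \<in> Der q d T e S"
  defines "TX \<equiv> ext_tmat d T \<delta> S"
    and "iM \<equiv> incl_mat d e" and "\<pi>M \<equiv> proj_mat d"
  shows
    "exact6 (Aq q)
       (Hom_mod q g TG e S) (Hom_mod q g TG (d + e) TX) (Hom_mod q g TG d T)
       (Ext_mod q g TG e S) (Ext_mod q g TG (d + e) TX) (Ext_mod q g TG d T)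
       (\<lambda>f. mmul q e iM f)
       (\<lambda>h. mmul q (d + e) \<pi>M h)
       (\<lambda>f a. mmul q d (\<delta> a) f)
       (\<lambda>\<eta> a. mneg (mmul q e iM (\<eta> a)))
       (\<lambda>\<eta> a. mneg (mmul q (d + e) \<pi>M (\<eta> a)))
     \<and>
     exact6 (Aq q)
       (Hom_mod q d T g TG) (Hom_mod q (d + e) TX g TG) (Hom_mod q e S g TG)
       (Ext_mod q d T g TG) (Ext_mod q (d + e) TX g TG) (Ext_mod q e S g TG)
       (\<lambda>h. mmul q d h \<pi>M)
       (\<lambda>h. mmul q (d + e) h iM)
       (\<lambda>h a. mmul q e h (\<delta> a))
       (\<lambda>\<eta> a. mneg (mmul q d (\<eta> a) \<pi>M))
       (\<lambda>\<eta> a. mneg (mmul q (d + e) (\<eta> a) iM))"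
proof -
  have pr: "prime CHAR('k)" using assms(1,2) by simp
  have qpos: "0 < q" using assms(1,4) prime_gt_0_nat by simp
  have frob: "((x::'k) + y) ^ q = x ^ q + y ^ q" for x y
    using freshmans_dream'[OF pr, of q n x y] assms(2,4) by simp
  interpret tw q "TYPE('k)" by standard (use qpos frob in auto)
  have Tm: "tmat d d T" using assms(6) unfolding is_tmodule_def by blast
  have Sm: "tmat e e S" using assms(7) unfolding is_tmodule_def by blast
  have Gm: "tmat g g TG" using assms(8) unfolding is_tmodule_def by blast
  interpret C: tctx q "TYPE('k)" d e g T S TG \<delta> by standard (use Tm Sm Gm assms(9) in auto)
  show ?thesis unfolding exact6_def TX_def iM_def \<pi>M_def
    using C.i1_hom C.i2_hom C.i3_hom C.i4_hom C.i5_hom C.i_inj C.i_at2 C.i_at3 C.i_at4 C.i_at5 C.i_surj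
      C.ii1_hom C.ii2_hom C.ii3_hom C.ii4_hom C.ii5_hom C.ii_inj C.ii_at2 C.ii_at3 C.ii_at4 C.ii_at5 C.ii_surj
    by blast
qed

end
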